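(* Let $\hbar_1\in[-1,1]\setminus\{0\}$ and let $\hbar\in[-1,1]$ have the same sign as $\hbar_1$. Let $\delta_1,\delta_2\in(0,1)$ satisfy $\hbar(1-\delta_1)=\hbar_1(1-\delta_2)$. Then $F$ restricts to a diffeomorphism $F:\tilde V_{\delta_1}\to\tilde V_{\delta_2}$ with $|\det d_qF|=(\hbar/\hbar_1)^{n|l|}$ for all $q\in\tilde V_{\delta_1}$ (here $|l|$ is the number of edges of $l$ and $d_qF$ is viewed as an endomorphism of $(\mathbb{R}^n)^m$). Moreover, if $q\in G^m$ and $\xi\in(\mathbb{R}^n)^l$ are such that $q+tS^{ml}(\hbar_1\xi)\in\tilde V_{\delta_1}$ for all $t\in[0,1]$, then $$F(q+S^{ml}(\hbar_1\xi))=F(q)+S^{ml}(\hbar\xi).$$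
   Context: Fix integers $n,D\ge1$. $G=\mathbb{T}^n=\mathbb{R}^n/\mathbb{Z}^n$; for a finite set $S$ and $x\in(\mathbb{R}^n)^S$, $[x]\in G^S$ is its class mod $(\mathbb{Z}^n)^S$; for $q\in G^S$, $X\in(\mathbb{R}^n)^S$, $q+X:=q+[X]$. $G^S$ carries normalized Haar measure. Lattices. A lattice is a finite set $l\subseteq\mathbb{R}^D\times\mathbb{R}^D$ of edges $e=(x,y)$ with $x<y$ lexicographically, distinct edges meeting at most at endpoints; $d_e=\|y-x\|$. $l\le m$ means every $e=(x_1,x_2)\in l$ is subdivided in $m$: there are $N\ge0$, $0<t_1<\dots<t_N<1$ with $y_0=x_1$, $y_s=(1-t_s)x_1+t_sx_2$, $y_{N+1}=x_2$, and all pieces $e_s=(y_{s-1},y_s)\in m$. For $R\in\mathbb{N}$, $l^R$ is obtained by subdividing every edge of $l$ into $R$ edges of equal length. For $l\le m$, $\gamma^{\mathrm{conf}}_{lm}:G^m\to G^l$, $\gamma^{\mathrm{conf}}_{lm}(q)_e=\sum_sq_{e_s}$; the linear map $S^{ml}:(\mathbb{R}^n)^l\to(\mathbb{R}^n)^m$ is $S^{ml}(\xi)_{e_s}=\frac{d_{e_s}}{d_e}\xi_e$ on pieces $e_s$ of $e\in l$ and $0$ on edges of $m$ that are not pieces of edges of $l$. Fix a lattice $l$, $R\in\mathbb{N}$, and a lattice $m$ obtained from $l^R$ by subdivisions only. For each $e\in l$ choose one piece $e'\in l^R$ of $e$ and let $\chi_{ll^R}:G^{l^R}\to G^l$, $\chi_{ll^R}(q)_e=q_{e'}$;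 let $\varphi:=\chi_{ll^R}\circ\gamma^{\mathrm{conf}}_{l^Rm}:G^m\to G^l$ (a smooth group homomorphism with $\varphi[S^{ml}(X)]=[X/R]$). For $\delta\ge0$ let $U_\delta:=\{\xi\in(\mathbb{R}^n)^l:\xi_e\in(-\tfrac12+\tfrac12\delta,\tfrac12-\tfrac12\delta)^n\ \forall e\in l\}$, $V_\delta:=\{[\xi]:\xi\in U_\delta\}\subseteq G^l$ and $\tilde V_\delta:=\varphi^{-1}(V_\delta)\subseteq G^m$. Define $\underline\varphi:\tilde V_0\to U_0$ by $\underline\varphi(q)=\xi$ where $\xi\in U_0$ is the unique element with $\varphi(q)=[\xi]$. Given $\hbar_1,\hbar$ as in the claim, define $F:\tilde V_0\to G^m$ by $F(q):=q+R\big(\frac{\hbar}{\hbar_1}-1\big)S^{ml}(\underline\varphi(q))$. *)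

theory Defs
  imports "HOL-Analysis.Analysis"
begin

type_synonym 'd pt = "real ^ 'd"
type_synonym 'd edge = "'d pt \<times> 'd pt"

text \<open>Configurations: an element of (R^n)^S is represented by a function on edges
  (only its values on S matter). A point of the torus G = T^n = R^n/Z^n is represented
  by its unique representative in [0,1)^n; an element of G^S by a function that takes
  such representatives on S and is 0 off S.\<close>
type_synonym ('d,'n) cfg = "'d edge \<Rightarrow> real ^ 'n"

definition lex_less :: "(real, 'd::{finite,linorder}) vec \<Rightarrow> (real, 'd) vec \<Rightarrow> bool" where
  "lex_less x y \<longleftrightarrow> (\<exists>i. x $ i < y $ i \<and> (\<forall>j<i. x $ j = y $ j))"

definition elen :: "('d::finite) edge \<Rightarrow> real" where
  "elen e = norm (snd e - fst e)"

definition seg :: "('d::finite) edge \<Rightarrow> 'd pt set" where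
  "seg e = closed_segment (fst e) (snd e)"

definition lattice :: "('d::{finite,linorder}) edge set \<Rightarrow> bool" where
  "lattice l \<longleftrightarrow> finite l \<and> (\<forall>e\<in>l. lex_less (fst e) (snd e)) \<and>
     (\<forall>e\<in>l. \<forall>e'\<in>l. e \<noteq> e' \<longrightarrow> seg e \<inter> seg e' \<subseteq> {fst e, snd e} \<inter> {fst e', snd e'})"

definition subdiv :: "('d::finite) edge set \<Rightarrow> 'd edge set \<Rightarrow> bool" where
  "subdiv l m \<longleftrightarrow> (\<forall>e\<in>l. \<exists>(N::nat) (t::nat \<Rightarrow> real).
      (\<forall>s\<in>{1..N}. 0 < t s \<and> t s < 1) \<and> (\<forall>s\<in>{1..<N}. t s < t (Suc s)) \<and>
      (let y = (\<lambda>s. if s = 0 then fst e else if s = Suc N then snd e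
                     else (1 - t s) *\<^sub>R fst e + t s *\<^sub>R snd e)
       in \<forall>s\<in>{1..Suc N}. (y (s - 1), y s) \<in> m))"

definition refine :: "('d::finite) edge set \<Rightarrow> nat \<Rightarrow> 'd edge set" where
  "refine l R = (\<Union>e\<in>l. (\<lambda>i::nat.
      ((1 - real i / real R) *\<^sub>R fst e + (real i / real R) *\<^sub>R snd e,
       (1 - real (Suc i) / real R) *\<^sub>R fst e + (real (Suc i) / real R) *\<^sub>R snd e)) ` {..<R})"

text \<open>The pieces of an edge e in a lattice m (for l \<le> m these are exactly the
  edges e_s of the subdivision of e).\<close>
definition pieces :: "('d::finite) edge \<Rightarrow> 'd edge set \<Rightarrow> 'd edge set" where
  "pieces e m = {f \<in> m. seg f \<subseteq> seg e}"

definition tcl :: "('d::finite) edge set \<Rightarrow> ('d,'n::finite) cfg \<Rightarrow> ('d,'n) cfg" where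
  "tcl S X = (\<lambda>e. if e \<in> S then (\<chi> i. frac (X e $ i)) else 0)"

definition Gsp :: "('d::finite) edge set \<Rightarrow> ('d,'n::finite) cfg set" where
  "Gsp S = range (tcl S)"

definition tadd :: "('d::finite) edge set \<Rightarrow> ('d,'n::finite) cfg \<Rightarrow> ('d,'n) cfg \<Rightarrow> ('d,'n) cfg" where
  "tadd S q X = tcl S (\<lambda>e. q e + X e)"

definition gconf :: "('d::finite) edge set \<Rightarrow> 'd edge set \<Rightarrow> ('d,'n::finite) cfg \<Rightarrow> ('d,'n) cfg" where
  "gconf l m q = tcl l (\<lambda>e. \<Sum>f\<in>pieces e m. q f)"

definition Sml :: "('d::finite) edge set \<Rightarrow> 'd edge set \<Rightarrow> ('d,'n::finite) cfg \<Rightarrow> ('d,'n) cfg" where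
  "Sml m l \<xi> = (\<lambda>f. \<Sum>e\<in>{e \<in> l. f \<in> pieces e m}. (elen f / elen e) *\<^sub>R \<xi> e)"

definition chi :: "('d::finite) edge set \<Rightarrow> ('d edge \<Rightarrow> 'd edge) \<Rightarrow> ('d,'n::finite) cfg \<Rightarrow> ('d,'n) cfg" where
  "chi l ch q = (\<lambda>e. if e \<in> l then q (ch e) else 0)"

definition phi :: "('d::finite) edge set \<Rightarrow> 'd edge set \<Rightarrow> nat \<Rightarrow> ('d edge \<Rightarrow> 'd edge)
    \<Rightarrow> ('d,'n::finite) cfg \<Rightarrow> ('d,'n) cfg" where
  "phi l m R ch q = chi l ch (gconf (refine l R) m q)"

definition Ubox :: "('d::finite) edge set \<Rightarrow> real \<Rightarrow> ('d,'n::finite) cfg set" where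
  "Ubox l \<delta> = {\<xi>. (\<forall>e\<in>l. \<forall>i. - 1/2 + \<delta>/2 < \<xi> e $ i \<and> \<xi> e $ i < 1/2 - \<delta>/2)
                   \<and> (\<forall>e. e \<notin> l \<longrightarrow> \<xi> e = 0)}"

definition Vb :: "('d::finite) edge set \<Rightarrow> real \<Rightarrow> ('d,'n::finite) cfg set" where
  "Vb l \<delta> = tcl l ` Ubox l \<delta>"

definition Vt :: "('d::finite) edge set \<Rightarrow> 'd edge set \<Rightarrow> nat \<Rightarrow> ('d edge \<Rightarrow> 'd edge) \<Rightarrow> real
    \<Rightarrow> ('d,'n::finite) cfg set" where
  "Vt l m R ch \<delta> = {q \<in> Gsp m. phi l m R ch q \<in> Vb l \<delta>}"

definition phiu :: "('d::finite) edge set \<Rightarrow> 'd edge set \<Rightarrow> nat \<Rightarrow> ('d edge \<Rightarrow> 'd edge)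
    \<Rightarrow> ('d,'n::finite) cfg \<Rightarrow> ('d,'n) cfg" where
  "phiu l m R ch q = (THE \<xi>. \<xi> \<in> Ubox l 0 \<and> phi l m R ch q = tcl l \<xi>)"

definition Fmap :: "('d::finite) edge set \<Rightarrow> 'd edge set \<Rightarrow> nat \<Rightarrow> ('d edge \<Rightarrow> 'd edge)
    \<Rightarrow> real \<Rightarrow> real \<Rightarrow> ('d,'n::finite) cfg \<Rightarrow> ('d,'n) cfg" where
  "Fmap l m R ch h1 h q =
     tadd m q (\<lambda>f. (real R * (h / h1 - 1)) *\<^sub>R Sml m l (phiu l m R ch q) f)"

definition Wsp :: "('d::finite) edge set \<Rightarrow> ('d,'n::finite) cfg set" where
  "Wsp S = {X. \<forall>e. e \<notin> S \<longrightarrow> X e = 0}"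

definition bvec :: "('d::finite) edge \<Rightarrow> 'n::finite \<Rightarrow> ('d,'n) cfg" where
  "bvec f i = (\<lambda>e. if e = f then axis i 1 else 0)"

definition has_partials :: "('d::finite) edge set \<Rightarrow> ('d,'n::finite) cfg set
    \<Rightarrow> (('d,'n) cfg \<Rightarrow> ('d,'n) cfg) \<Rightarrow> ('d edge \<Rightarrow> 'n \<Rightarrow> ('d,'n) cfg \<Rightarrow> ('d,'n) cfg) \<Rightarrow> bool" where
  "has_partials S U g Dg \<longleftrightarrow> (\<forall>X\<in>U. \<forall>f\<in>S. \<forall>i. \<forall>e\<in>S.
     ((\<lambda>t. g (\<lambda>e'. X e' + t *\<^sub>R bvec f i e') e) has_vector_derivative Dg f i X e) (at 0))"

fun Ck :: "nat \<Rightarrow> ('d::finite) edge set \<Rightarrow> ('d,'n::finite) cfg set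
    \<Rightarrow> (('d,'n) cfg \<Rightarrow> ('d,'n) cfg) \<Rightarrow> bool" where
  "Ck 0 S U g = (\<forall>e\<in>S. continuous_on U (\<lambda>X. g X e))"
| "Ck (Suc k) S U g = (Ck 0 S U g \<and> (\<exists>Dg. has_partials S U g Dg \<and> (\<forall>f\<in>S. \<forall>i. Ck k S U (Dg f i))))"

definition smooth_on :: "('d::finite) edge set \<Rightarrow> ('d,'n::finite) cfg set
    \<Rightarrow> (('d,'n) cfg \<Rightarrow> ('d,'n) cfg) \<Rightarrow> bool" where
  "smooth_on S U g \<longleftrightarrow> (\<forall>k. Ck k S U g)"

text \<open>A map F defined on a subset A of G^m is smooth iff it has smooth local lifts
  through the covering map (R^n)^m \<rightarrow> G^m.\<close>
definition tsmooth_on :: "('d::finite) edge set \<Rightarrow> ('d,'n::finite) cfg set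
    \<Rightarrow> (('d,'n) cfg \<Rightarrow> ('d,'n) cfg) \<Rightarrow> bool" where
  "tsmooth_on m A F \<longleftrightarrow> (\<forall>X\<in>Wsp m. tcl m X \<in> A \<longrightarrow>
     (\<exists>U g. X \<in> U \<and> openin (top_of_set (Wsp m)) U \<and>
        (\<forall>Y\<in>U. tcl m Y \<in> A \<and> tcl m (g Y) = F (tcl m Y)) \<and> smooth_on m U g))"

definition tdiffeo :: "('d::finite) edge set \<Rightarrow> ('d,'n::finite) cfg set \<Rightarrow> ('d,'n) cfg set
    \<Rightarrow> (('d,'n) cfg \<Rightarrow> ('d,'n) cfg) \<Rightarrow> bool" where
  "tdiffeo m A B F \<longleftrightarrow> bij_betw F A B \<and> tsmooth_on m A F \<and> tsmooth_on m B (inv_into A F)"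

definition det_on :: "'i set \<Rightarrow> ('i \<Rightarrow> 'i \<Rightarrow> real) \<Rightarrow> real" where
  "det_on I M = (\<Sum>p\<in>{p. p permutes I}. of_int (sign p) * (\<Prod>i\<in>I. M i (p i)))"

end

theory Submission
  imports Defs
begin


lemma sum_sign_zero:
  assumes "finite S" "a \<in> S" "b \<in> S" "a \<noteq> b"
  shows "(\<Sum>p\<in>{p. p permutes S}. (of_int (sign p) :: real)) = 0"
proof -
  let ?t = "Transposition.transpose a b"
  have tp: "?t permutes S" using assms by (simp add: permutes_swap_id)
  have "(\<Sum>p\<in>{p. p permutes S}. (of_int (sign p) :: real))
      = (\<Sum>p\<in>{p. p permutes S}. of_int (sign (?t \<circ> p)))"
  proof (rule sum.reindex_bij_witness[of _ "\<lambda>p. ?t \<circ> p" "\<lambda>p. ?t \<circ> p"])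
    show "\<And>p. p \<in> {p. p permutes S} \<Longrightarrow> ?t \<circ> (?t \<circ> p) = p"
      by (simp add: o_assoc[symmetric] fun_eq_iff)
    show "\<And>p. p \<in> {p. p permutes S} \<Longrightarrow> ?t \<circ> p \<in> {p. p permutes S}"
      using tp by (simp add: permutes_compose)
  qed (use tp in \<open>auto simp: permutes_compose comp_assoc[symmetric]\<close>)
  also have "\<dots> = (\<Sum>p\<in>{p. p permutes S}. - of_int (sign p))"
  proof (rule sum.cong)
    fix p assume "p \<in> {p. p permutes S}"
    then have "permutation p" using assms(1) permutes_imp_permutation by blast
    then show "of_int (sign (?t \<circ> p)) = (- of_int (sign p) :: real)"
      using assms(4) by (simp add: sign_compose permutation_swap_id sign_swap_id)
  qed simp
  also have "\<dots> = - (\<Sum>p\<in>{p. p permutes S}. of_int (sign p))" by (simp add: sum_negf)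
  finally show ?thesis by simp
qed

lemma det_on_empty: "det_on {} M = 1"
  by (simp add: det_on_def)

lemma sum_sign_small:
  assumes "finite X"
  shows "(\<Sum>p\<in>{p. p permutes X}. (of_int (sign p) :: real)) = (if card X \<le> 1 then 1 else 0)"
proof (cases "card X \<le> 1")
  case True
  then have "X = {} \<or> (\<exists>x. X = {x})" using assms
    by (metis One_nat_def card_1_singletonE card_0_eq le_SucE le_zero_eq)
  then show ?thesis using True by auto
next
  case False
  then have "\<not> (\<forall>a\<in>X. \<forall>b\<in>X. a = b)" using card_le_Suc0_iff_eq[OF assms] by auto
  then obtain a b where "a \<in> X" "b \<in> X" "a \<noteq> b" by blast
  then show ?thesis using sum_sign_zero[OF assms] False by simp
qed

lemma det_on_rank1:
  assumes "finite C"
  shows "det_on C (\<lambda>x y. (if x = y then 1 else 0) + a x) = 1 + (\<Sum>x\<in>C. a x)"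
proof -
  have "det_on C (\<lambda>x y. (if x = y then 1 else 0) + a x)
     = (\<Sum>p\<in>{p. p permutes C}. of_int (sign p) *
          (\<Sum>X\<in>Pow C. (\<Prod>x\<in>X. a x) * (\<Prod>x\<in>C-X. (if x = p x then 1 else 0))))"
    unfolding det_on_def
    by (intro sum.cong refl) (simp add: prod_add[OF assms, of a] add.commute)
  also have "\<dots> = (\<Sum>X\<in>Pow C. (\<Prod>x\<in>X. a x) *
          (\<Sum>p\<in>{p. p permutes C}. of_int (sign p) * (\<Prod>x\<in>C-X. (if x = p x then 1 else 0))))"
    by (simp add: sum_distrib_left sum_distrib_right mult_ac sum.swap[of _ "Pow C"])
  also have "\<dots> = (\<Sum>X\<in>Pow C. (\<Prod>x\<in>X. a x) * (if card X \<le> 1 then 1 else 0))"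
  proof (rule sum.cong[OF refl])
    fix X assume X: "X \<in> Pow C"
    have fX: "finite X" using X assms finite_subset by auto
    have "(\<Sum>p\<in>{p. p permutes C}. of_int (sign p) * (\<Prod>x\<in>C-X. (if x = p x then 1 else 0)))
        = (\<Sum>p\<in>{p. p permutes X}. (of_int (sign p)::real))"
    proof -
      have "(\<Sum>p\<in>{p. p permutes C}. of_int (sign p) * (\<Prod>x\<in>C-X. (if x = p x then 1 else 0)))
          = (\<Sum>p\<in>{p. p permutes X}. of_int (sign p) * (\<Prod>x\<in>C-X. (if x = p x then 1 else (0::real))))"
      proof (rule sum.mono_neutral_right)
        show "finite {p. p permutes C}" using assms finite_permutations by blast
        show "{p. p permutes X} \<subseteq> {p. p permutes C}" using X permutes_subset by blast
        show "\<forall>p\<in>{p. p permutes C} - {p. p permutes X}.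
            of_int (sign p) * (\<Prod>x\<in>C-X. (if x = p x then 1 else (0::real))) = 0"
        proof
          fix p assume p: "p \<in> {p. p permutes C} - {p. p permutes X}"
          have "\<exists>x\<in>C-X. p x \<noteq> x"
          proof (rule ccontr)
            assume "\<not> ?thesis"
            then have "\<forall>x. x \<notin> X \<longrightarrow> p x = x" using p permutes_not_in by fastforce
            moreover have "bij_betw p X X"
            proof -
              have inj: "inj_on p X" using p permutes_inj_on by blast
              have "p ` X \<subseteq> X"
              proof
                fix y assume "y \<in> p ` X"
                then obtain x where x: "x \<in> X" "y = p x" by auto
                show "y \<in> X"
                proof (rule ccontr)
                  assume "y \<notin> X"
                  then have "p y = y" using \<open>\<forall>x. x \<notin> X \<longrightarrow> p x = x\<close> by blast
                  then have "p y = p x" using x by simp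
                  then have "y = x" using p permutes_inj[of p C] by (auto simp: inj_def)
                  then show False using x \<open>y \<notin> X\<close> by simp
                qed
              qed
              then have "p ` X = X" using inj fX by (simp add: endo_inj_surj)
              then show ?thesis using inj by (simp add: bij_betw_def)
            qed
            ultimately have "p permutes X" by (simp add: bij_imp_permutes)
            then show False using p by simp
          qed
          then obtain x where xx: "x \<in> C - X" "p x \<noteq> x" by blast
          have "(\<Prod>x\<in>C-X. (if x = p x then 1 else (0::real))) = 0"
            apply (rule prod_zero) using assms apply simp using xx by (intro bexI[of _ x]) auto
          then show "of_int (sign p) * (\<Prod>x\<in>C-X. (if x = p x then 1 else (0::real))) = 0" by simp
        qed
      qed
      also have "\<dots> = (\<Sum>p\<in>{p. p permutes X}. (of_int (sign p)::real))"
      proof (rule sum.cong[OF refl])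
        fix p assume "p \<in> {p. p permutes X}"
        then have "\<forall>x\<in>C-X. p x = x" using permutes_not_in by fastforce
        then show "of_int (sign p) * (\<Prod>x\<in>C-X. (if x = p x then 1 else (0::real))) = of_int (sign p)"
          by simp
      qed
      finally show ?thesis .
    qed
    then show "(\<Prod>x\<in>X. a x) * (\<Sum>p\<in>{p. p permutes C}. of_int (sign p) * (\<Prod>x\<in>C-X. (if x = p x then 1 else 0)))
        = (\<Prod>x\<in>X. a x) * (if card X \<le> 1 then 1 else 0)"
      using sum_sign_small[OF fX] by simp
  qed
  also have "\<dots> = (\<Sum>X\<in>insert {} ((\<lambda>x. {x}) ` C). (\<Prod>x\<in>X. a x) * (if card X \<le> 1 then 1 else 0))"
  proof (rule sum.mono_neutral_right)
    show "finite (Pow C)" using assms by simp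
    show "insert {} ((\<lambda>x. {x}) ` C) \<subseteq> Pow C" by auto
    show "\<forall>X\<in>Pow C - insert {} ((\<lambda>x. {x}) ` C). (\<Prod>x\<in>X. a x) * (if card X \<le> 1 then 1 else 0) = 0"
    proof
      fix X assume X: "X \<in> Pow C - insert {} ((\<lambda>x. {x}) ` C)"
      have "\<not> card X \<le> 1"
      proof
        assume "card X \<le> 1"
        moreover have "finite X" using X assms finite_subset by auto
        ultimately have "X = {} \<or> (\<exists>x. X = {x})"
          by (metis One_nat_def card_1_singletonE card_0_eq le_SucE le_zero_eq)
        then show False using X by auto
      qed
      then show "(\<Prod>x\<in>X. a x) * (if card X \<le> 1 then 1 else 0) = 0" by simp
    qed
  qed
  also have "\<dots> = 1 + (\<Sum>x\<in>C. a x)"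
  proof -
    have "{} \<notin> (\<lambda>x. {x}) ` C" by auto
    moreover have "finite ((\<lambda>x. {x}) ` C)" using assms by simp
    ultimately have "(\<Sum>X\<in>insert {} ((\<lambda>x. {x}) ` C). (\<Prod>x\<in>X. a x) * (if card X \<le> 1 then 1 else 0))
       = 1 + (\<Sum>X\<in>(\<lambda>x. {x}) ` C. (\<Prod>x\<in>X. a x) * (if card X \<le> 1 then 1 else 0))"
      by (simp add: sum.insert)
    also have "(\<Sum>X\<in>(\<lambda>x. {x}) ` C. (\<Prod>x\<in>X. a x) * (if card X \<le> 1 then 1 else 0)) = (\<Sum>x\<in>C. a x)"
      by (subst sum.reindex) (auto simp: inj_on_def)
    finally show ?thesis .
  qed
  finally show ?thesis .
qed



lemma det_on_reduce:
  assumes "finite I" "Q \<subseteq> I" "\<And>x y. x \<in> I \<Longrightarrow> y \<in> I \<Longrightarrow> y \<notin> Q \<Longrightarrow> M x y = (if x = y then 1 else 0)"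
  shows "det_on I M = det_on Q M"
proof -
  have fQ: "finite Q" using assms finite_subset by blast
  have "det_on I M = (\<Sum>p\<in>{p. p permutes Q}. of_int (sign p) * (\<Prod>x\<in>I. M x (p x)))"
    unfolding det_on_def
  proof (rule sum.mono_neutral_right)
    show "finite {p. p permutes I}" using assms finite_permutations by blast
    show "{p. p permutes Q} \<subseteq> {p. p permutes I}" using assms permutes_subset by blast
    show "\<forall>p\<in>{p. p permutes I} - {p. p permutes Q}. of_int (sign p) * (\<Prod>x\<in>I. M x (p x)) = 0"
    proof
      fix p assume p: "p \<in> {p. p permutes I} - {p. p permutes Q}"
      have pI: "p permutes I" using p by simp
      show "of_int (sign p) * (\<Prod>x\<in>I. M x (p x)) = 0"
      proof (rule ccontr)
        assume nz: "of_int (sign p) * (\<Prod>x\<in>I. M x (p x)) \<noteq> 0"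
        then have nz2: "\<And>x. x \<in> I \<Longrightarrow> M x (p x) \<noteq> 0" using assms(1) by auto
        have fix1: "\<And>y. y \<notin> Q \<Longrightarrow> p y = y"
        proof -
          fix y assume yQ: "y \<notin> Q"
          show "p y = y"
          proof (cases "y \<in> I")
            case False then show ?thesis using pI permutes_not_in by fastforce
          next
            case True
            obtain x where x: "x \<in> I" "p x = y" using pI True permutes_image[OF pI] by (metis imageE)
            have "M x y \<noteq> 0" using nz2[OF x(1)] x by simp
            then have "x = y" using assms(3)[OF x(1) True yQ] by (auto split: if_splits)
            then show ?thesis using x by simp
          qed
        qed
        have "bij_betw p Q Q"
        proof -
          have inj: "inj_on p Q" using pI permutes_inj by (metis inj_on_subset subset_UNIV)
          have "p ` Q \<subseteq> Q"
          proof
            fix y assume "y \<in> p ` Q"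
            then obtain x where x: "x \<in> Q" "y = p x" by auto
            show "y \<in> Q"
            proof (rule ccontr)
              assume "y \<notin> Q"
              then have "p y = p x" using fix1 x by simp
              then have "y = x" using permutes_inj[OF pI] by (auto simp: inj_def)
              then show False using x \<open>y \<notin> Q\<close> by simp
            qed
          qed
          then have "p ` Q = Q" using inj fQ by (simp add: endo_inj_surj)
          then show ?thesis using inj by (simp add: bij_betw_def)
        qed
        then have "p permutes Q" using fix1 by (simp add: bij_imp_permutes)
        then show False using p by simp
      qed
    qed
  qed
  also have "\<dots> = det_on Q M"
    unfolding det_on_def
  proof (rule sum.cong[OF refl])
    fix p assume "p \<in> {p. p permutes Q}"
    then have pq: "\<And>x. x \<notin> Q \<Longrightarrow> p x = x" using permutes_not_in by fastforce
    have "(\<Prod>x\<in>I. M x (p x)) = (\<Prod>x\<in>I - Q. M x (p x)) * (\<Prod>x\<in>Q. M x (p x))"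
      using assms(1,2) by (simp add: prod.subset_diff)
    also have "(\<Prod>x\<in>I - Q. M x (p x)) = 1"
      by (rule prod.neutral) (auto simp: pq assms(3))
    finally show "of_int (sign p) * (\<Prod>x\<in>I. M x (p x)) = of_int (sign p) * (\<Prod>x\<in>Q. M x (p x))" by simp
  qed
  finally show ?thesis .
qed

lemma permutes_restrict_invariant:
  assumes "r permutes S" "finite A" "r ` A \<subseteq> A"
  shows "(\<lambda>x. if x \<in> A then r x else x) permutes A"
proof -
  have inj: "inj_on r A" using assms permutes_inj by (metis inj_on_subset subset_UNIV)
  then have "r ` A = A" using assms by (simp add: endo_inj_surj)
  then have "bij_betw r A A" using inj by (simp add: bij_betw_def)
  then have "bij_betw (\<lambda>x. if x \<in> A then r x else x) A A"
    by (rule bij_betw_cong[THEN iffD1, rotated]) auto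
  then show ?thesis by (rule bij_imp_permutes) auto
qed

lemma det_on_block2:
  assumes fA: "finite A" and fB: "finite B" and disj: "A \<inter> B = {}"
    and z1: "\<And>x y. x \<in> A \<Longrightarrow> y \<in> B \<Longrightarrow> M x y = 0"
    and z2: "\<And>x y. x \<in> B \<Longrightarrow> y \<in> A \<Longrightarrow> M x y = 0"
  shows "det_on (A \<union> B) M = det_on A M * det_on B M"
proof -
  let ?PA = "{p. p permutes A}" and ?PB = "{p. p permutes B}"
  let ?h = "\<lambda>(p, q). p \<circ> (q :: 'a \<Rightarrow> 'a)"
  have "det_on A M * det_on B M
      = (\<Sum>pq\<in>?PA \<times> ?PB. (of_int (sign (fst pq)) * (\<Prod>x\<in>A. M x (fst pq x))) *
                           (of_int (sign (snd pq)) * (\<Prod>x\<in>B. M x (snd pq x))))"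
    unfolding det_on_def by (simp add: sum_product sum.cartesian_product case_prod_beta)
  also have "\<dots> = (\<Sum>pq\<in>?PA \<times> ?PB. of_int (sign (?h pq)) * (\<Prod>x\<in>A \<union> B. M x (?h pq x)))"
  proof (rule sum.cong[OF refl])
    fix pq assume pq: "pq \<in> ?PA \<times> ?PB"
    obtain p q where pqd: "pq = (p, q)" by (cases pq)
    have p: "p permutes A" and q: "q permutes B" using pq pqd by auto
    have "sign (p \<circ> q) = sign p * sign q"
      using p q fA fB by (simp add: sign_compose permutes_imp_permutation)
    moreover have "(\<Prod>x\<in>A \<union> B. M x ((p \<circ> q) x)) = (\<Prod>x\<in>A. M x (p x)) * (\<Prod>x\<in>B. M x (q x))"
    proof -
      have "(\<Prod>x\<in>A \<union> B. M x ((p \<circ> q) x)) = (\<Prod>x\<in>A. M x ((p \<circ> q) x)) * (\<Prod>x\<in>B. M x ((p \<circ> q) x))"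
        using fA fB disj by (simp add: prod.union_disjoint)
      moreover have "(\<Prod>x\<in>A. M x ((p \<circ> q) x)) = (\<Prod>x\<in>A. M x (p x))"
        by (rule prod.cong[OF refl]) (use q disj permutes_not_in in fastforce)
      moreover have "(\<Prod>x\<in>B. M x ((p \<circ> q) x)) = (\<Prod>x\<in>B. M x (q x))"
      proof (rule prod.cong[OF refl])
        fix x assume "x \<in> B"
        then have "q x \<in> B" using permutes_in_image[OF q] by simp
        then have "q x \<notin> A" using disj by auto
        then show "M x ((p \<circ> q) x) = M x (q x)" using p permutes_not_in by fastforce
      qed
      ultimately show ?thesis by simp
    qed
    ultimately show "(of_int (sign (fst pq)) * (\<Prod>x\<in>A. M x (fst pq x))) *
                           (of_int (sign (snd pq)) * (\<Prod>x\<in>B. M x (snd pq x)))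
        = of_int (sign (?h pq)) * (\<Prod>x\<in>A \<union> B. M x (?h pq x))" using pqd by simp
  qed
  also have "\<dots> = (\<Sum>r\<in>?h ` (?PA \<times> ?PB). of_int (sign r) * (\<Prod>x\<in>A \<union> B. M x (r x)))"
  proof (rule sum.reindex[symmetric, unfolded comp_def])
    show "inj_on ?h (?PA \<times> ?PB)"
    proof (rule inj_onI)
      fix pq pq' assume a: "pq \<in> ?PA \<times> ?PB" "pq' \<in> ?PA \<times> ?PB" "?h pq = ?h pq'"
      obtain p q where pqd: "pq = (p, q)" by (cases pq)
      obtain p' q' where pqd': "pq' = (p', q')" by (cases pq')
      have p: "p permutes A" and q: "q permutes B" and p': "p' permutes A" and q': "q' permutes B"
        using a pqd pqd' by auto
      have e: "\<And>x. p (q x) = p' (q' x)" using a(3) pqd pqd' by (simp add: fun_eq_iff)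
      have "p = p'"
      proof
        fix x show "p x = p' x"
        proof (cases "x \<in> B")
          case True then have "x \<notin> A" using disj by auto
          then show ?thesis using permutes_not_in[OF p] permutes_not_in[OF p'] by simp
        next
          case False then show ?thesis using e[of x] permutes_not_in[OF q] permutes_not_in[OF q'] by simp
        qed
      qed
      moreover have "q = q'"
      proof
        fix x show "q x = q' x"
        proof (cases "x \<in> B")
          case True
          then have "q x \<in> B" "q' x \<in> B" using permutes_in_image[OF q] permutes_in_image[OF q'] by simp_all
          then have "q x \<notin> A" "q' x \<notin> A" using disj by auto
          then show ?thesis using e[of x] permutes_not_in[OF p] permutes_not_in[OF p'] by simp
        next
          case False then show ?thesis using permutes_not_in[OF q] permutes_not_in[OF q'] by simp
        qed
      qed
      ultimately show "pq = pq'" using pqd pqd' by simp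
    qed
  qed
  also have "\<dots> = det_on (A \<union> B) M"
    unfolding det_on_def
  proof (rule sum.mono_neutral_left)
    show "finite {p. p permutes A \<union> B}" using fA fB finite_permutations by blast
    show "?h ` (?PA \<times> ?PB) \<subseteq> {p. p permutes A \<union> B}"
    proof
      fix r assume "r \<in> ?h ` (?PA \<times> ?PB)"
      then obtain p q where "p permutes A" "q permutes B" "r = p \<circ> q" by auto
      then show "r \<in> {p. p permutes A \<union> B}"
        by (metis (no_types, lifting) mem_Collect_eq permutes_compose permutes_subset sup.cobounded1 sup.cobounded2)
    qed
    show "\<forall>r\<in>{p. p permutes A \<union> B} - ?h ` (?PA \<times> ?PB). of_int (sign r) * (\<Prod>x\<in>A \<union> B. M x (r x)) = 0"
    proof
      fix r assume r: "r \<in> {p. p permutes A \<union> B} - ?h ` (?PA \<times> ?PB)"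
      have rp: "r permutes A \<union> B" using r by simp
      show "of_int (sign r) * (\<Prod>x\<in>A \<union> B. M x (r x)) = 0"
      proof (rule ccontr)
        assume "of_int (sign r) * (\<Prod>x\<in>A \<union> B. M x (r x)) \<noteq> 0"
        then have nz: "\<And>x. x \<in> A \<union> B \<Longrightarrow> M x (r x) \<noteq> 0" using fA fB by auto
        have rA: "r ` A \<subseteq> A"
        proof
          fix y assume "y \<in> r ` A"
          then obtain x where x: "x \<in> A" "y = r x" by auto
          then have "y \<in> A \<union> B" using permutes_in_image[OF rp] by auto
          moreover have "y \<notin> B" using z1[OF x(1)] nz[of x] x by auto
          ultimately show "y \<in> A" by simp
        qed
        have rB: "r ` B \<subseteq> B"
        proof
          fix y assume "y \<in> r ` B"
          then obtain x where x: "x \<in> B" "y = r x" by auto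
          then have "y \<in> A \<union> B" using permutes_in_image[OF rp] by auto
          moreover have "y \<notin> A" using z2[OF x(1)] nz[of x] x by auto
          ultimately show "y \<in> B" by simp
        qed
        define p where "p = (\<lambda>x. if x \<in> A then r x else x)"
        define q where "q = (\<lambda>x. if x \<in> B then r x else x)"
        have "p permutes A" unfolding p_def by (rule permutes_restrict_invariant[OF rp fA rA])
        moreover have "q permutes B" unfolding q_def by (rule permutes_restrict_invariant[OF rp fB rB])
        moreover have "r = p \<circ> q"
        proof
          fix x
          show "r x = (p \<circ> q) x"
          proof (cases "x \<in> B")
            case True
            then have "r x \<in> B" using rB by auto
            then have "r x \<notin> A" using disj by auto
            then show ?thesis using True by (simp add: p_def q_def)
          next
            case False
            then show ?thesis
              by (cases "x \<in> A") (auto simp: p_def q_def intro: permutes_not_in[OF rp])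
          qed
        qed
        ultimately have "r \<in> ?h ` (?PA \<times> ?PB)" by auto
        then show False using r by simp
      qed
    qed
  qed
  finally show ?thesis by simp
qed

lemma det_on_blocks:
  assumes "finite K" "\<And>k. k \<in> K \<Longrightarrow> finite (B k)"
    and "\<And>k k'. k \<in> K \<Longrightarrow> k' \<in> K \<Longrightarrow> k \<noteq> k' \<Longrightarrow> B k \<inter> B k' = {}"
    and "\<And>k k' x y. k \<in> K \<Longrightarrow> k' \<in> K \<Longrightarrow> k \<noteq> k' \<Longrightarrow> x \<in> B k \<Longrightarrow> y \<in> B k' \<Longrightarrow> M x y = 0"
  shows "det_on (\<Union>k\<in>K. B k) M = (\<Prod>k\<in>K. det_on (B k) M)"
  using assms
proof (induction K rule: finite_induct)
  case empty then show ?case by (simp add: det_on_empty)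
next
  case (insert k K)
  have "det_on (\<Union>k\<in>insert k K. B k) M = det_on (B k \<union> (\<Union>k\<in>K. B k)) M" by simp
  also have "\<dots> = det_on (B k) M * det_on (\<Union>k\<in>K. B k) M"
  proof (rule det_on_block2)
    show "finite (B k)" "finite (\<Union>k\<in>K. B k)" using insert by auto
    show "B k \<inter> (\<Union>k\<in>K. B k) = {}" using insert.prems(2) insert.hyps(2) by fastforce
    show "\<And>x y. x \<in> B k \<Longrightarrow> y \<in> (\<Union>k\<in>K. B k) \<Longrightarrow> M x y = 0"
      using insert.prems(3) insert.hyps(2) by fastforce
    show "\<And>x y. x \<in> (\<Union>k\<in>K. B k) \<Longrightarrow> y \<in> B k \<Longrightarrow> M x y = 0"
      using insert.prems(3) insert.hyps(2) by fastforce
  qed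
  also have "det_on (\<Union>k\<in>K. B k) M = (\<Prod>k\<in>K. det_on (B k) M)"
    by (intro insert.IH) (meson insertI2 insert.prems)+
  finally show ?case using insert.hyps by simp
qed



lemma lex_less_neq: "lex_less x y \<Longrightarrow> x \<noteq> y" unfolding lex_less_def by auto

lemma lattice_ne: "lattice L \<Longrightarrow> e \<in> L \<Longrightarrow> fst e \<noteq> snd e"
  unfolding lattice_def using lex_less_neq by blast

lemma lattice_finite: "lattice L \<Longrightarrow> finite L" unfolding lattice_def by blast

lemma lattice_unique:
  assumes "lattice L" "e \<in> L" "e' \<in> L" "fst f \<noteq> snd f" "seg f \<subseteq> seg e" "seg f \<subseteq> seg e'"
  shows "e = e'"
proof (rule ccontr)
  assume "e \<noteq> e'"
  then have "seg e \<inter> seg e' \<subseteq> {fst e, snd e} \<inter> {fst e', snd e'}" using assms(1-3) unfolding lattice_def by blast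
  then have "seg f \<subseteq> {fst e, snd e}" using assms(5,6) by blast
  then have "finite (seg f)" by (rule finite_subset) simp
  then show False using assms(4) by (simp add: seg_def)
qed

definition aff :: "'a::real_vector \<Rightarrow> 'a \<Rightarrow> real \<Rightarrow> 'a" where
  "aff A B u = (1 - u) *\<^sub>R A + u *\<^sub>R B"

lemma aff_alt: "aff A B u = A + u *\<^sub>R (B - A)"
  by (simp add: aff_def algebra_simps)

lemma aff_diff: "aff A B v - aff A B u = (v - u) *\<^sub>R (B - A)"
  by (simp add: aff_alt algebra_simps)

lemma aff_inj: "A \<noteq> B \<Longrightarrow> aff A B u = aff A B v \<Longrightarrow> u = v"
  using aff_diff[of A B u v] by simp

lemma aff_in_seg: "0 \<le> u \<Longrightarrow> u \<le> 1 \<Longrightarrow> aff A B u \<in> closed_segment A B"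
  unfolding in_segment aff_def by blast

lemma aff_between:
  assumes "a < b" "a \<le> u" "u \<le> b"
  shows "aff A B u \<in> closed_segment (aff A B a) (aff A B b)"
proof -
  define v where "v = (u - a) / (b - a)"
  have v: "0 \<le> v" "v \<le> 1" using assms by (auto simp: v_def divide_simps)
  have u: "u = a + v * (b - a)" using assms by (simp add: v_def)
  have "aff A B u = (1 - v) *\<^sub>R aff A B a + v *\<^sub>R aff A B b"
    unfolding aff_alt u by (simp add: algebra_simps)
  then show ?thesis unfolding in_segment using v by blast
qed

lemma seg_aff: "closed_segment A B = aff A B ` {0..1}"
  unfolding closed_segment_def aff_def by auto

lemma subdiv_pieces_sum:
  fixes E :: "('d::{finite,linorder}) edge" and m :: "'d edge set"
  assumes lat: "lattice m" and ne: "fst E \<noteq> snd E"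
    and t1: "\<forall>s\<in>{1..N}. 0 < t s \<and> t s < 1" and t2: "\<forall>s\<in>{1..<N}. t s < t (Suc s)"
    and ym: "\<forall>s\<in>{1..Suc N}. (y (s - 1), y s) \<in> m"
    and ydef: "y = (\<lambda>s. if s = 0 then fst E else if s = Suc N then snd E
                     else (1 - t s) *\<^sub>R fst E + t s *\<^sub>R snd E)"
  shows "(\<Sum>f\<in>pieces E m. elen f) = elen E"
proof -
  define A where "A = fst E"
  define B where "B = snd E"
  have AB: "A \<noteq> B" using ne by (simp add: A_def B_def)
  define T where "T = (\<lambda>s::nat. if s = 0 then 0 else if s \<le> N then t s else real s - real N)"
  have Tsuc: "T s < T (Suc s)" for s
  proof -
    consider "s = 0" "N = 0" | "s = 0" "N > 0" | "0 < s" "s < N" | "s = N" "N > 0" | "s > N" by linarith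
    then show ?thesis
    proof cases
      case 2 then show ?thesis using t1 by (auto simp: T_def)
    next
      case 3 then show ?thesis using t2 by (auto simp: T_def)
    next
      case 4 then show ?thesis using t1 by (auto simp: T_def)
    qed (auto simp: T_def)
  qed
  have Tmono: "s < s' \<Longrightarrow> T s < T s'" for s s' using lift_Suc_mono_less[of T, OF Tsuc] by blast
  have T0: "T 0 = 0" and TN: "T (Suc N) = 1" by (auto simp: T_def)
  have Trange: "s \<le> Suc N \<Longrightarrow> 0 \<le> T s \<and> T s \<le> 1" for s
    using Tmono[of 0 s] Tmono[of s "Suc N"] T0 TN by (cases "s = 0"; cases "s = Suc N") auto
  have yT: "s \<le> Suc N \<Longrightarrow> y s = aff A B (T s)" for s
    by (auto simp: ydef T_def aff_def A_def B_def)
  define pc where "pc = (\<lambda>s. (aff A B (T (s - 1)), aff A B (T s)))"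
  have pcm: "s \<in> {1..Suc N} \<Longrightarrow> pc s \<in> m" for s
  proof -
    assume s: "s \<in> {1..Suc N}"
    have "(y (s - 1), y s) \<in> m" using ym s by blast
    moreover have "y s = aff A B (T s)" "y (s - 1) = aff A B (T (s - 1))" using s yT by auto
    ultimately show "pc s \<in> m" by (simp add: pc_def)
  qed
  have segE: "seg E = closed_segment A B" by (simp add: seg_def A_def B_def)
  have pc_sub: "s \<in> {1..Suc N} \<Longrightarrow> seg (pc s) \<subseteq> seg E" for s
    unfolding segE seg_def pc_def
    using Trange[of s] Trange[of "s - 1"]
    by (intro closed_segment_subset) (auto simp: A_def[symmetric] B_def[symmetric] intro!: aff_in_seg)
  have pieces_eq: "pieces E m = pc ` {1..Suc N}"
  proof
    show "pc ` {1..Suc N} \<subseteq> pieces E m" using pcm pc_sub unfolding pieces_def by blast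
    show "pieces E m \<subseteq> pc ` {1..Suc N}"
    proof
      fix f assume f: "f \<in> pieces E m"
      have fm: "f \<in> m" and fE: "seg f \<subseteq> seg E" using f by (auto simp: pieces_def)
      have fne: "fst f \<noteq> snd f" using lattice_ne[OF lat fm] .
      show "f \<in> pc ` {1..Suc N}"
      proof (rule ccontr)
        assume nf: "f \<notin> pc ` {1..Suc N}"
        define z where "z = midpoint (fst f) (snd f)"
        have "z \<in> seg E" using fE by (auto simp: z_def seg_def)
        then obtain u where u: "0 \<le> u" "u \<le> 1" "z = aff A B u" unfolding segE seg_aff by auto
        obtain s where s: "s \<in> {1..Suc N}" "T (s - 1) \<le> u" "u \<le> T s"
        proof (cases "u \<le> T 1")
          case True then show ?thesis using that[of 1] u T0 by auto
        next
          case False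
          define s where "s = (LEAST s. u \<le> T s)"
          have ex: "u \<le> T (Suc N)" using TN u by simp
          have s1: "u \<le> T s" unfolding s_def by (rule LeastI[of _ "Suc N"]) (rule ex)
          have s2: "s \<le> Suc N" unfolding s_def by (rule Least_le) (rule ex)
          have T01: "T 0 < T 1" by (rule Tmono) simp
          have s30: "s \<noteq> 0"
          proof
            assume "s = 0" with s1 T0 have "u \<le> 0" by simp
            with False T01 T0 show False by linarith
          qed
          have s3: "s \<noteq> 0" "s \<noteq> 1" using s30 s1 False by auto
          have "\<not> u \<le> T (s - 1)" unfolding s_def
            by (rule not_less_Least) (use s3 in \<open>auto simp: s_def\<close>)
          then show ?thesis using that[of s] s1 s2 s3 by auto
        qed
        have "z \<in> seg (pc s)"
          unfolding seg_def pc_def fst_conv snd_conv u(3)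
          by (rule aff_between) (use s Tmono[of "s - 1" s] in auto)
        moreover have "z \<in> seg f" by (simp add: z_def seg_def)
        moreover have "pc s \<noteq> f" using nf s by auto
        ultimately have "z \<in> {fst f, snd f}"
          using lat pcm[OF s(1)] fm unfolding lattice_def by blast
        then show False using fne by (auto simp: z_def)
      qed
    qed
  qed
  have inj: "inj_on pc {1..Suc N}"
  proof (rule inj_onI)
    fix s s' assume ss: "s \<in> {1..Suc N}" "s' \<in> {1..Suc N}" "pc s = pc s'"
    then have "T s = T s'" using aff_inj[OF AB] by (auto simp: pc_def)
    then show "s = s'" using Tmono[of s s'] Tmono[of s' s] by (metis less_irrefl nat_neq_iff)
  qed
  have "(\<Sum>f\<in>pieces E m. elen f) = (\<Sum>s\<in>{1..Suc N}. elen (pc s))"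
    unfolding pieces_eq by (rule sum.reindex[OF inj, unfolded comp_def])
  also have "\<dots> = (\<Sum>s\<in>{1..Suc N}. (T s - T (s - 1)) * norm (B - A))"
  proof (rule sum.cong[OF refl])
    fix s assume "s \<in> {1..Suc N}"
    then have "T (s - 1) < T s" using Tmono[of "s - 1" s] by auto
    then show "elen (pc s) = (T s - T (s - 1)) * norm (B - A)"
      by (simp add: elen_def pc_def aff_diff)
  qed
  also have "\<dots> = (\<Sum>i\<in>{0..N}. (T (Suc i) - T i)) * norm (B - A)"
    unfolding sum_distrib_right[symmetric] One_nat_def sum.shift_bounds_cl_Suc_ivl by simp
  also have "\<dots> = norm (B - A)" by (simp add: sum_Suc_diff T0 TN)
  also have "\<dots> = elen E" by (simp add: elen_def A_def B_def)
  finally show ?thesis .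
qed



lemma tcl_apply: "tcl S X e = (if e \<in> S then (\<chi> i. frac (X e $ i)) else 0)"
  by (simp add: tcl_def)

lemma tcl_tcl: "tcl S (tcl S X) = tcl S X"
proof (rule ext)
  fix e show "tcl S (tcl S X) e = tcl S X e" by (cases "e \<in> S") (simp_all add: tcl_def)
qed

lemma tcl_idem: "q \<in> Gsp S \<Longrightarrow> tcl S q = q"
  unfolding Gsp_def using tcl_tcl by blast

lemma tcl_Gsp [simp]: "tcl S X \<in> Gsp S"
  by (simp add: Gsp_def)

lemma tcl_tcl_add: "tcl S (\<lambda>e. tcl S X e + Y e) = tcl S (\<lambda>e. X e + Y e)"
proof (rule ext)
  fix e show "tcl S (\<lambda>e. tcl S X e + Y e) e = tcl S (\<lambda>e. X e + Y e) e"
    by (cases "e \<in> S") (simp_all add: tcl_def)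
qed

lemma tcl_eq_iff: "tcl S X = tcl S Y \<longleftrightarrow> (\<forall>e\<in>S. \<forall>i. X e $ i - Y e $ i \<in> \<int>)"
proof -
  have "frac a = frac b \<longleftrightarrow> a - b \<in> \<int>" for a b :: real
    by (metis frac_diff_eq frac_diff_zero frac_eq_0_iff)
  note fr = this
  show ?thesis
  proof
    assume eq: "tcl S X = tcl S Y"
    show "\<forall>e\<in>S. \<forall>i. X e $ i - Y e $ i \<in> \<int>"
    proof (intro ballI allI)
      fix e i assume e: "e \<in> S"
      have "tcl S X e $ i = tcl S Y e $ i" using eq by simp
      then have "frac (X e $ i) = frac (Y e $ i)" using e by (simp add: tcl_def)
      then show "X e $ i - Y e $ i \<in> \<int>" using fr by blast
    qed
  next
    assume h: "\<forall>e\<in>S. \<forall>i. X e $ i - Y e $ i \<in> \<int>"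
    show "tcl S X = tcl S Y"
    proof (rule ext)
      fix e show "tcl S X e = tcl S Y e"
      proof (cases "e \<in> S")
        case True
        then have "\<forall>i. frac (X e $ i) = frac (Y e $ i)" using h fr by blast
        then show ?thesis using True by (simp add: tcl_def)
      qed (simp add: tcl_def)
    qed
  qed
qed

lemma tcl_cong_int:
  assumes "\<And>e i. e \<in> S \<Longrightarrow> X e $ i - Y e $ i \<in> \<int>"
  shows "tcl S (\<lambda>e. X e + Z e) = tcl S (\<lambda>e. Y e + Z e)"
  using assms unfolding tcl_eq_iff by (simp add: algebra_simps)

lemma frac_sum_frac: "finite A \<Longrightarrow> frac (\<Sum>x\<in>A. frac (g x)) = frac (\<Sum>x\<in>A. g x)"
  by (induction A rule: finite_induct) (auto, metis frac_add_simps(2))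

lemma Ints_abs_lt1: "(x::real) \<in> \<int> \<Longrightarrow> \<bar>x\<bar> < 1 \<Longrightarrow> x = 0"
proof (elim Ints_cases)
  fix n assume "x = of_int n" "\<bar>x\<bar> < 1"
  then have "\<bar>n\<bar> < 1" by linarith
  then show "x = 0" using \<open>x = of_int n\<close> by simp
qed

lemma Ubox_mono: "0 \<le> \<delta> \<Longrightarrow> Ubox l \<delta> \<subseteq> Ubox l 0"
proof
  fix \<xi> assume d: "0 \<le> \<delta>" and x: "\<xi> \<in> Ubox l \<delta>"
  have "\<forall>e\<in>l. \<forall>i. - 1/2 < \<xi> e $ i \<and> \<xi> e $ i < 1/2"
  proof (intro ballI allI)
    fix e i assume "e \<in> l"
    then have "- 1/2 + \<delta>/2 < \<xi> e $ i" "\<xi> e $ i < 1/2 - \<delta>/2" using x by (auto simp: Ubox_def)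
    then show "- 1/2 < \<xi> e $ i \<and> \<xi> e $ i < 1/2" using d by linarith
  qed
  then show "\<xi> \<in> Ubox l 0" using x by (simp add: Ubox_def)
qed

lemma Ubox_unique:
  assumes "\<xi> \<in> Ubox l 0" "\<eta> \<in> Ubox l 0" "tcl l \<xi> = tcl l \<eta>"
  shows "\<xi> = \<eta>"
proof
  fix e show "\<xi> e = \<eta> e"
  proof (cases "e \<in> l")
    case True
    show ?thesis
    proof (rule vec_eq_iff[THEN iffD2], rule allI)
      fix i
      have "\<xi> e $ i - \<eta> e $ i \<in> \<int>" using assms(3) True unfolding tcl_eq_iff by blast
      moreover have "\<bar>\<xi> e $ i - \<eta> e $ i\<bar> < 1"
      proof -
        have "- 1/2 < \<xi> e $ i" "\<xi> e $ i < 1/2" "- 1/2 < \<eta> e $ i" "\<eta> e $ i < 1/2"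
          using assms(1,2) True by (auto simp: Ubox_def)
        then show ?thesis by linarith
      qed
      ultimately show "\<xi> e $ i = \<eta> e $ i" using Ints_abs_lt1 by fastforce
    qed
  next
    case False
    have z: "\<forall>e. e \<notin> l \<longrightarrow> \<xi> e = 0" "\<forall>e. e \<notin> l \<longrightarrow> \<eta> e = 0" using assms(1,2) unfolding Ubox_def mem_Collect_eq by blast+
    show ?thesis using spec[OF z(1), of e] spec[OF z(2), of e] False by argo
  qed
qed

locale Lctx =
  fixes l m :: "('d::{finite,linorder}) edge set" and R :: nat and ch :: "'d edge \<Rightarrow> 'd edge"
  assumes lat_l: "lattice l" and lat_m: "lattice m" and Rpos: "R > 0"
    and sub: "subdiv (refine l R) m"
    and chp: "\<forall>e\<in>l. ch e \<in> pieces e (refine l R)"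
begin

abbreviation P where "P e \<equiv> pieces (ch e) m"

lemma fin_l: "finite l" and fin_m: "finite m"
  using lat_l lat_m lattice_finite by auto

lemma fin_pieces: "finite (pieces e m)"
  using fin_m by (simp add: pieces_def)

lemma pieces_m: "f \<in> pieces e m \<Longrightarrow> f \<in> m" by (simp add: pieces_def)

definition rpiece :: "'d edge \<Rightarrow> nat \<Rightarrow> 'd edge" where
  "rpiece e i = (aff (fst e) (snd e) (real i / real R), aff (fst e) (snd e) (real (Suc i) / real R))"

lemma refine_eq: "refine l R = (\<Union>e\<in>l. rpiece e ` {..<R})"
  unfolding refine_def rpiece_def aff_def by simp

lemma rpiece_ne: "fst e \<noteq> snd e \<Longrightarrow> fst (rpiece e i) \<noteq> snd (rpiece e i)"
proof -
  assume ne: "fst e \<noteq> snd e"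
  have "real i / real R \<noteq> real (Suc i) / real R" using Rpos by (simp add: divide_simps)
  then show ?thesis unfolding rpiece_def fst_conv snd_conv using aff_inj[OF ne] by blast
qed

lemma rpiece_seg: "i < R \<Longrightarrow> seg (rpiece e i) \<subseteq> seg e"
  unfolding seg_def rpiece_def
proof -
  assume i: "i < R"
  have "0 \<le> real i / real R" "real i / real R \<le> 1" "0 \<le> real (Suc i) / real R" "real (Suc i) / real R \<le> 1"
    using i by (auto simp: divide_simps)
  then show "closed_segment (fst (aff (fst e) (snd e) (real i / real R), aff (fst e) (snd e) (real (Suc i) / real R)))
     (snd (aff (fst e) (snd e) (real i / real R), aff (fst e) (snd e) (real (Suc i) / real R)))
    \<subseteq> closed_segment (fst e) (snd e)"
    by (intro closed_segment_subset) (simp_all add: aff_in_seg)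
qed

lemma rpiece_len: "elen (rpiece e i) = elen e / real R"
  unfolding elen_def rpiece_def by (simp add: aff_diff diff_divide_distrib[symmetric])

lemma ch_rpiece: "e \<in> l \<Longrightarrow> \<exists>i<R. ch e = rpiece e i"
proof -
  assume e: "e \<in> l"
  have "ch e \<in> refine l R" "seg (ch e) \<subseteq> seg e" using chp e unfolding pieces_def by blast+
  then obtain e2 i where e2: "e2 \<in> l" "i < R" "ch e = rpiece e2 i" unfolding refine_eq by blast
  have ne: "fst (ch e) \<noteq> snd (ch e)" using e2 rpiece_ne lattice_ne[OF lat_l e2(1)] by simp
  have "e2 = e"
    by (rule lattice_unique[OF lat_l e2(1) e ne]) (use e2 rpiece_seg[of i e2] \<open>seg (ch e) \<subseteq> seg e\<close> in simp_all)
  then show ?thesis using e2 by blast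
qed

lemma ch_ne: "e \<in> l \<Longrightarrow> fst (ch e) \<noteq> snd (ch e)"
proof -
  assume "e \<in> l"
  then obtain i where "ch e = rpiece e i" using ch_rpiece by blast
  then show ?thesis using rpiece_ne lattice_ne[OF lat_l \<open>e \<in> l\<close>] by simp
qed

lemma ch_len: "e \<in> l \<Longrightarrow> elen (ch e) = elen e / real R"
proof -
  assume "e \<in> l"
  then obtain i where "ch e = rpiece e i" using ch_rpiece by blast
  then show ?thesis using rpiece_len by simp
qed

lemma elen_pos: "e \<in> l \<Longrightarrow> elen e > 0"
  using lattice_ne[OF lat_l, of e] by (auto simp: elen_def)

lemma ch_sum: "e \<in> l \<Longrightarrow> (\<Sum>f\<in>P e. elen f) = elen (ch e)"
proof -
  assume e: "e \<in> l"
  have "ch e \<in> refine l R" using chp e unfolding pieces_def by blast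
  then obtain N and t :: "nat \<Rightarrow> real" where
    t1: "\<forall>s\<in>{1..N}. 0 < t s \<and> t s < 1" and t2: "\<forall>s\<in>{1..<N}. t s < t (Suc s)" and
    ym: "let y = (\<lambda>s. if s = 0 then fst (ch e) else if s = Suc N then snd (ch e)
                     else (1 - t s) *\<^sub>R fst (ch e) + t s *\<^sub>R snd (ch e))
       in \<forall>s\<in>{1..Suc N}. (y (s - 1), y s) \<in> m"
    using sub unfolding subdiv_def by blast
  show ?thesis
    by (rule subdiv_pieces_sum[OF lat_m ch_ne[OF e] t1 t2 ym[unfolded Let_def]]) simp
qed

lemma P_sub: "e \<in> l \<Longrightarrow> f \<in> P e \<Longrightarrow> f \<in> pieces e m"
proof -
  assume e: "e \<in> l" and f: "f \<in> P e"
  have "seg (ch e) \<subseteq> seg e" using chp e unfolding pieces_def by blast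
  moreover have "f \<in> m" "seg f \<subseteq> seg (ch e)" using f unfolding pieces_def by blast+
  ultimately show ?thesis unfolding pieces_def by blast
qed

lemma unique_l: "f \<in> m \<Longrightarrow> e \<in> l \<Longrightarrow> e' \<in> l \<Longrightarrow> f \<in> pieces e m \<Longrightarrow> f \<in> pieces e' m \<Longrightarrow> e = e'"
proof -
  assume a: "f \<in> m" "e \<in> l" "e' \<in> l" "f \<in> pieces e m" "f \<in> pieces e' m"
  show "e = e'"
    by (rule lattice_unique[OF lat_l a(2) a(3) lattice_ne[OF lat_m a(1)]]) (use a(4,5) in \<open>simp_all add: pieces_def\<close>)
qed

lemma P_owner: "e \<in> l \<Longrightarrow> f \<in> P e \<Longrightarrow> {e' \<in> l. f \<in> pieces e' m} = {e}"
proof -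
  assume a: "e \<in> l" "f \<in> P e"
  have "f \<in> pieces e m" "f \<in> m" using P_sub[OF a] pieces_m a(2) by auto
  then show ?thesis using unique_l a(1) by blast
qed

lemma P_disj: "e \<in> l \<Longrightarrow> e' \<in> l \<Longrightarrow> f \<in> P e \<Longrightarrow> f \<in> P e' \<Longrightarrow> e = e'"
proof -
  assume a: "e \<in> l" "e' \<in> l" "f \<in> P e" "f \<in> P e'"
  show "e = e'" using P_owner[OF a(1,3)] P_owner[OF a(2,4)] by simp
qed

end



context Lctx begin

definition psi :: "('d,'n::finite) cfg \<Rightarrow> ('d,'n) cfg" where
  "psi Y = (\<lambda>e. if e \<in> l then (\<Sum>f\<in>P e. Y f) else 0)"

lemma phi_tcl: "phi l m R ch (tcl m Y) = tcl l (psi Y)"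
proof (rule ext)
  fix e
  show "phi l m R ch (tcl m Y) e = tcl l (psi Y) e"
  proof (cases "e \<in> l")
    case True
    have chr: "ch e \<in> refine l R" using chp True unfolding pieces_def by blast
    have "phi l m R ch (tcl m Y) e = (\<chi> i. frac ((\<Sum>f\<in>P e. tcl m Y f) $ i))"
      using True chr by (simp add: phi_def chi_def gconf_def tcl_def)
    also have "\<dots> = (\<chi> i. frac (\<Sum>f\<in>P e. frac (Y f $ i)))"
    proof -
      have "\<And>f. f \<in> P e \<Longrightarrow> tcl m Y f = (\<chi> i. frac (Y f $ i))" using pieces_m by (simp add: tcl_def)
      then show ?thesis by (simp add: sum_component)
    qed
    also have "\<dots> = (\<chi> i. frac (\<Sum>f\<in>P e. Y f $ i))" by (simp add: frac_sum_frac fin_pieces)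
    also have "\<dots> = tcl l (psi Y) e" using True by (simp add: tcl_def psi_def sum_component)
    finally show ?thesis .
  next
    case False
    then show ?thesis by (simp add: phi_def chi_def tcl_def)
  qed
qed

lemma phi_Gsp: "q \<in> Gsp m \<Longrightarrow> phi l m R ch q = tcl l (psi q)"
  using phi_tcl tcl_idem by metis

lemma Sml_lin: "Sml m l (\<lambda>e. s *\<^sub>R A e + t *\<^sub>R B e) = (\<lambda>f. s *\<^sub>R Sml m l A f + t *\<^sub>R Sml m l B f)"
  unfolding Sml_def by (simp add: sum.distrib scaleR_sum_right scaleR_add_right ac_simps)

lemma Sml_scale: "Sml m l (\<lambda>e. t *\<^sub>R A e) = (\<lambda>f. t *\<^sub>R Sml m l A f)"
  unfolding Sml_def by (simp add: scaleR_sum_right ac_simps)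

lemma Sml_cong: "(\<And>e. e \<in> l \<Longrightarrow> A e = B e) \<Longrightarrow> Sml m l A = Sml m l B"
  unfolding Sml_def by (intro ext sum.cong) auto

lemma psi_lin: "psi (\<lambda>f. s *\<^sub>R A f + t *\<^sub>R B f) = (\<lambda>e. s *\<^sub>R psi A e + t *\<^sub>R psi B e)"
  unfolding psi_def by (rule ext) (simp add: sum.distrib scaleR_sum_right)

lemma psi_Sml: "psi (Sml m l \<xi>) = (\<lambda>e. if e \<in> l then (1 / real R) *\<^sub>R \<xi> e else 0)"
proof (rule ext)
  fix e
  show "psi (Sml m l \<xi>) e = (if e \<in> l then (1 / real R) *\<^sub>R \<xi> e else 0)"
  proof (cases "e \<in> l")
    case True
    have "psi (Sml m l \<xi>) e = (\<Sum>f\<in>P e. Sml m l \<xi> f)" using True by (simp add: psi_def)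
    also have "\<dots> = (\<Sum>f\<in>P e. (elen f / elen e) *\<^sub>R \<xi> e)"
      by (rule sum.cong) (simp_all add: Sml_def P_owner[OF True])
    also have "\<dots> = ((\<Sum>f\<in>P e. elen f) / elen e) *\<^sub>R \<xi> e"
      by (simp add: scaleR_sum_left sum_divide_distrib)
    also have "\<dots> = (1 / real R) *\<^sub>R \<xi> e"
      using True ch_sum ch_len elen_pos[OF True] by simp
    finally show ?thesis using True by simp
  qed (simp add: psi_def)
qed

lemma Vt_iff: "q \<in> Vt l m R ch \<delta> \<longleftrightarrow> q \<in> Gsp m \<and> (\<exists>\<xi>\<in>Ubox l \<delta>. phi l m R ch q = tcl l \<xi>)"
  unfolding Vt_def Vb_def by auto

lemma phiu_eq: "\<xi> \<in> Ubox l 0 \<Longrightarrow> phi l m R ch q = tcl l \<xi> \<Longrightarrow> phiu l m R ch q = \<xi>"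
  unfolding phiu_def by (rule the_equality) (auto intro: Ubox_unique)

lemma Vt_phiu:
  assumes "q \<in> Vt l m R ch \<delta>" "0 \<le> \<delta>"
  shows "phiu l m R ch q \<in> Ubox l \<delta>" "phi l m R ch q = tcl l (phiu l m R ch q)"
proof -
  obtain \<xi> where x: "\<xi> \<in> Ubox l \<delta>" "phi l m R ch q = tcl l \<xi>" using assms Vt_iff by blast
  then have "phiu l m R ch q = \<xi>" using phiu_eq Ubox_mono[OF assms(2)] by blast
  then show "phiu l m R ch q \<in> Ubox l \<delta>" "phi l m R ch q = tcl l (phiu l m R ch q)" using x by auto
qed

lemma Ubox_off: "\<xi> \<in> Ubox l \<delta> \<Longrightarrow> e \<notin> l \<Longrightarrow> \<xi> e = 0"
proof -
  assume a: "\<xi> \<in> Ubox l \<delta>" "e \<notin> l"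
  have z: "\<forall>e. e \<notin> l \<longrightarrow> \<xi> e = 0" using a(1) unfolding Ubox_def mem_Collect_eq by blast
  show ?thesis using spec[OF z, of e] a(2) by argo
qed

lemma Ubox_scale:
  assumes "\<xi> \<in> Ubox l \<delta>1" "lam > 0" "lam * (1 - \<delta>1) = 1 - \<delta>2"
  shows "(\<lambda>e. lam *\<^sub>R \<xi> e) \<in> Ubox l \<delta>2"
  unfolding Ubox_def
proof (intro CollectI conjI ballI allI impI)
  fix e i assume e: "e \<in> l"
  have b: "- 1/2 + \<delta>1/2 < \<xi> e $ i" "\<xi> e $ i < 1/2 - \<delta>1/2" using assms(1) e by (auto simp: Ubox_def)
  have "lam * (- 1/2 + \<delta>1/2) < lam * \<xi> e $ i" "lam * \<xi> e $ i < lam * (1/2 - \<delta>1/2)"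
    using b assms(2) by simp_all
  moreover have "lam * (- 1/2 + \<delta>1/2) = - 1/2 + \<delta>2/2" "lam * (1/2 - \<delta>1/2) = 1/2 - \<delta>2/2"
    using assms(3) by (simp_all add: algebra_simps)
  ultimately show "- 1/2 + \<delta>2/2 < (lam *\<^sub>R \<xi> e) $ i" "(lam *\<^sub>R \<xi> e) $ i < 1/2 - \<delta>2/2" by simp_all
next
  fix e assume "e \<notin> l"
  then show "lam *\<^sub>R \<xi> e = 0" using Ubox_off[OF assms(1)] by simp
qed

definition cc :: "real \<Rightarrow> real \<Rightarrow> real" where "cc h1 h = real R * (h / h1 - 1)"

lemma Fmap_alt: "Fmap l m R ch h1 h q = tcl m (\<lambda>f. q f + cc h1 h *\<^sub>R Sml m l (phiu l m R ch q) f)"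
  by (simp add: Fmap_def tadd_def cc_def)

lemma Fmap_maps:
  assumes h1: "h1 \<noteq> 0" and pos: "h / h1 > 0" and d1: "0 \<le> \<delta>1" and hd: "h * (1 - \<delta>1) = h1 * (1 - \<delta>2)"
    and q: "q \<in> Vt l m R ch \<delta>1"
  shows "Fmap l m R ch h1 h q \<in> Vt l m R ch \<delta>2"
    and "phi l m R ch (Fmap l m R ch h1 h q) = tcl l (\<lambda>e. (h / h1) *\<^sub>R phiu l m R ch q e)"
    and "(\<lambda>e. (h / h1) *\<^sub>R phiu l m R ch q e) \<in> Ubox l \<delta>2"
proof -
  define \<xi> where "\<xi> = phiu l m R ch q"
  have xU: "\<xi> \<in> Ubox l \<delta>1" and px: "phi l m R ch q = tcl l \<xi>" using Vt_phiu[OF q d1] by (auto simp: \<xi>_def)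
  have qG: "q \<in> Gsp m" using q Vt_iff by blast
  have "tcl l (psi q) = tcl l \<xi>" using px phi_Gsp[OF qG] by simp
  then have int: "\<And>e i. e \<in> l \<Longrightarrow> psi q e $ i - \<xi> e $ i \<in> \<int>" unfolding tcl_eq_iff by blast
  define c where "c = cc h1 h"
  have "phi l m R ch (Fmap l m R ch h1 h q) = tcl l (psi (\<lambda>f. q f + c *\<^sub>R Sml m l \<xi> f))"
    by (simp add: Fmap_alt phi_tcl c_def \<xi>_def)
  also have "psi (\<lambda>f. q f + c *\<^sub>R Sml m l \<xi> f) = (\<lambda>e. psi q e + c *\<^sub>R psi (Sml m l \<xi>) e)"
    using psi_lin[of 1 q c "Sml m l \<xi>"] by simp
  also have "tcl l \<dots> = tcl l (\<lambda>e. \<xi> e + c *\<^sub>R psi (Sml m l \<xi>) e)"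
    by (rule tcl_cong_int) (rule int)
  also have "(\<lambda>e. \<xi> e + c *\<^sub>R psi (Sml m l \<xi>) e) = (\<lambda>e. (h / h1) *\<^sub>R \<xi> e)"
  proof (rule ext)
    fix e show "\<xi> e + c *\<^sub>R psi (Sml m l \<xi>) e = (h / h1) *\<^sub>R \<xi> e"
    proof (cases "e \<in> l")
      case True
      have "\<xi> e + c *\<^sub>R psi (Sml m l \<xi>) e = (1 + c / real R) *\<^sub>R \<xi> e"
        using True by (simp add: psi_Sml algebra_simps)
      also have "1 + c / real R = h / h1" using Rpos by (simp add: c_def cc_def)
      finally show ?thesis .
    next
      case False then show ?thesis using Ubox_off[OF xU False] by (simp add: psi_Sml)
    qed
  qed
  finally show ph: "phi l m R ch (Fmap l m R ch h1 h q) = tcl l (\<lambda>e. (h / h1) *\<^sub>R phiu l m R ch q e)"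
    by (simp add: \<xi>_def)
  have lam: "h / h1 * (1 - \<delta>1) = 1 - \<delta>2" using hd h1 by (simp add: field_simps)
  show U2: "(\<lambda>e. (h / h1) *\<^sub>R phiu l m R ch q e) \<in> Ubox l \<delta>2"
    using Ubox_scale[OF xU pos lam] by (simp add: \<xi>_def)
  show "Fmap l m R ch h1 h q \<in> Vt l m R ch \<delta>2"
    unfolding Vt_iff using ph U2 by (auto simp: Fmap_alt)
qed

lemma Fmap_inv:
  assumes h1: "h1 \<noteq> 0" and h: "h \<noteq> 0" and pos: "h / h1 > 0" and d1: "0 \<le> \<delta>1" and d2: "0 \<le> \<delta>2"
    and hd: "h * (1 - \<delta>1) = h1 * (1 - \<delta>2)"
    and q: "q \<in> Vt l m R ch \<delta>1"
  shows "Fmap l m R ch h h1 (Fmap l m R ch h1 h q) = q"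
proof -
  define \<xi> where "\<xi> = phiu l m R ch q"
  have qG: "q \<in> Gsp m" using q Vt_iff by blast
  have F2: "Fmap l m R ch h1 h q \<in> Vt l m R ch \<delta>2"
    and ph: "phi l m R ch (Fmap l m R ch h1 h q) = tcl l (\<lambda>e. (h / h1) *\<^sub>R \<xi> e)"
    and U2: "(\<lambda>e. (h / h1) *\<^sub>R \<xi> e) \<in> Ubox l \<delta>2"
    using Fmap_maps[OF h1 pos d1 hd q] by (simp_all add: \<xi>_def)
  have pu: "phiu l m R ch (Fmap l m R ch h1 h q) = (\<lambda>e. (h / h1) *\<^sub>R \<xi> e)"
    using phiu_eq[OF _ ph] U2 Ubox_mono[OF d2] by blast
  have "Fmap l m R ch h h1 (Fmap l m R ch h1 h q)
      = tcl m (\<lambda>f. tcl m (\<lambda>f. q f + cc h1 h *\<^sub>R Sml m l \<xi> f) f + cc h h1 *\<^sub>R Sml m l (\<lambda>e. (h / h1) *\<^sub>R \<xi> e) f)"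
    unfolding Fmap_alt[of h h1] pu by (simp add: Fmap_alt \<xi>_def)
  also have "\<dots> = tcl m (\<lambda>f. q f + (cc h1 h + cc h h1 * (h / h1)) *\<^sub>R Sml m l \<xi> f)"
    unfolding tcl_tcl_add Sml_scale by (simp add: algebra_simps)
  also have "cc h1 h + cc h h1 * (h / h1) = 0"
    using h1 h by (simp add: cc_def field_simps)
  finally show ?thesis using tcl_idem[OF qG] by simp
qed

end



lemma lin_vd: "((\<lambda>t. a + t *\<^sub>R (b::'a::real_normed_vector)) has_vector_derivative b) (at x)"
  by (auto intro!: derivative_eq_intros)

lemma affine_Ck:
  assumes "\<And>X t v e. g (\<lambda>e'. X e' + t *\<^sub>R v e') e = g X e + t *\<^sub>R Dl v e"
      and "\<And>e. e \<in> S \<Longrightarrow> continuous_on U (\<lambda>X. g X e)"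
  shows "Ck k S U g"
  using assms
proof (induction k arbitrary: g Dl)
  case 0 then show ?case by simp
next
  case (Suc k)
  have hp: "has_partials S U g (\<lambda>f i X. Dl (bvec f i))"
    unfolding has_partials_def
  proof (intro ballI allI)
    fix X f i e
    show "((\<lambda>t. g (\<lambda>e'. X e' + t *\<^sub>R bvec f i e') e) has_vector_derivative Dl (bvec f i) e) (at 0)"
      unfolding Suc.prems(1) by (rule lin_vd)
  qed
  have "Ck k S U (\<lambda>X. Dl (bvec f i))" for f i
    by (rule Suc.IH[of _ "\<lambda>v e. 0"]) simp_all
  then show ?case using Suc.prems(2) hp by auto
qed

lemma tsmooth_cong: "(\<And>x. x \<in> A \<Longrightarrow> F x = G x) \<Longrightarrow> tsmooth_on m A F \<Longrightarrow> tsmooth_on m A G"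
  unfolding tsmooth_on_def by metis

lemma cont_coord: "continuous_on U (\<lambda>X. X f)"
  by (rule continuous_on_subset[OF continuous_on_product_coordinates]) simp

context Lctx begin

lemma psi_cont: "continuous_on U (\<lambda>X. psi X e)"
  by (cases "e \<in> l") (simp_all add: psi_def cont_coord continuous_on_sum)

lemma Sml_cont:
  assumes "\<And>e. continuous_on U (\<lambda>X. Z X e)"
  shows "continuous_on U (\<lambda>X. Sml m l (Z X) f)"
  unfolding Sml_def by (intro continuous_intros assms)

lemma Fmap_local:
  fixes h1 h :: real
  assumes d1: "0 \<le> \<delta>1" and X: "tcl m X \<in> Vt l m R ch \<delta>1"
    and k_def: "k = (\<lambda>e. psi X e - phiu l m R ch (tcl m X) e)"
    and g_def: "g = (\<lambda>Y f. Y f + cc h1 h *\<^sub>R Sml m l (\<lambda>e. psi Y e - k e) f)"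
  shows "(\<lambda>e. psi X e - k e) \<in> Ubox l \<delta>1"
    and "\<And>Y. (\<lambda>e. psi Y e - k e) \<in> Ubox l \<delta>1 \<Longrightarrow> tcl m Y \<in> Vt l m R ch \<delta>1 \<and>
            phiu l m R ch (tcl m Y) = (\<lambda>e. psi Y e - k e) \<and> tcl m (g Y) = Fmap l m R ch h1 h (tcl m Y)"
    and "\<And>e i. e \<in> l \<Longrightarrow> k e $ i \<in> \<int>"
    and "\<And>e. e \<notin> l \<Longrightarrow> k e = 0"
proof -
  define \<xi> where "\<xi> = phiu l m R ch (tcl m X)"
  have xU: "\<xi> \<in> Ubox l \<delta>1" and px: "phi l m R ch (tcl m X) = tcl l \<xi>"
    using Vt_phiu[OF X d1] by (auto simp: \<xi>_def)
  have "tcl l (psi X) = tcl l \<xi>" using px by (simp add: phi_tcl)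
  then have int: "\<And>e i. e \<in> l \<Longrightarrow> psi X e $ i - \<xi> e $ i \<in> \<int>" unfolding tcl_eq_iff by blast
  show kint: "\<And>e i. e \<in> l \<Longrightarrow> k e $ i \<in> \<int>" using int by (simp add: k_def \<xi>_def)
  show koff: "\<And>e. e \<notin> l \<Longrightarrow> k e = 0" using Ubox_off[OF xU] by (simp add: k_def \<xi>_def psi_def)
  have "(\<lambda>e. psi X e - k e) = \<xi>" by (simp add: k_def \<xi>_def)
  then show "(\<lambda>e. psi X e - k e) \<in> Ubox l \<delta>1" using xU by simp
  fix Y assume YU: "(\<lambda>e. psi Y e - k e) \<in> Ubox l \<delta>1"
  have "phi l m R ch (tcl m Y) = tcl l (\<lambda>e. psi Y e + 0)" using phi_tcl by simp
  also have "\<dots> = tcl l (\<lambda>e. (psi Y e - k e) + 0)"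
    by (rule tcl_cong_int) (use kint in simp)
  finally have ph: "phi l m R ch (tcl m Y) = tcl l (\<lambda>e. psi Y e - k e)" by simp
  have V: "tcl m Y \<in> Vt l m R ch \<delta>1" unfolding Vt_iff using ph YU tcl_Gsp by blast
  have pu: "phiu l m R ch (tcl m Y) = (\<lambda>e. psi Y e - k e)"
    using phiu_eq[OF _ ph] YU Ubox_mono[OF d1] by blast
  have "Fmap l m R ch h1 h (tcl m Y) = tcl m (g Y)"
    unfolding Fmap_alt pu tcl_tcl_add g_def ..
  then show "tcl m Y \<in> Vt l m R ch \<delta>1 \<and>
            phiu l m R ch (tcl m Y) = (\<lambda>e. psi Y e - k e) \<and> tcl m (g Y) = Fmap l m R ch h1 h (tcl m Y)"
    using V pu by simp
qed

lemma Ubox_open_set: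
  fixes k :: "('d,'n::finite) cfg"
  assumes koff: "\<And>e. e \<notin> l \<Longrightarrow> k e = 0"
  shows "openin (top_of_set (Wsp m)) {Y \<in> Wsp m. (\<lambda>e. psi Y e - k e) \<in> Ubox l \<delta>}"
proof -
  define T where "T = (\<Inter>e\<in>l. \<Inter>i\<in>UNIV. {Y::('d,'n) cfg. - 1/2 + \<delta>/2 < psi Y e $ i - k e $ i} \<inter> {Y. psi Y e $ i - k e $ i < 1/2 - \<delta>/2})"
  have c: "continuous_on UNIV (\<lambda>Y::('d,'n) cfg. psi Y e $ i - k e $ i)" for e i
    by (intro continuous_intros psi_cont)
  have "open T" unfolding T_def
  proof (rule open_INT[OF fin_l], rule ballI, rule open_INT, simp, rule ballI, rule open_Int)
    fix e i
    show "open {Y::('d,'n) cfg. - 1/2 + \<delta>/2 < psi Y e $ i - k e $ i}"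
      by (rule open_Collect_less[OF continuous_on_const c])
    show "open {Y::('d,'n) cfg. psi Y e $ i - k e $ i < 1/2 - \<delta>/2}"
      by (rule open_Collect_less[OF c continuous_on_const])
  qed
  moreover have "{Y \<in> Wsp m. (\<lambda>e. psi Y e - k e) \<in> Ubox l \<delta>} = Wsp m \<inter> T"
  proof -
    have "(\<lambda>e. psi Y e - k e) \<in> Ubox l \<delta> \<longleftrightarrow> Y \<in> T" for Y
    proof -
      have "\<forall>e. e \<notin> l \<longrightarrow> psi Y e - k e = 0" using koff by (simp add: psi_def)
      then show ?thesis unfolding Ubox_def T_def by auto
    qed
    then show ?thesis by auto
  qed
  ultimately show ?thesis unfolding openin_open by blast
qed

lemma Fmap_tsmooth:
  assumes d1: "0 \<le> \<delta>1"
  shows "tsmooth_on m (Vt l m R ch \<delta>1) (Fmap l m R ch h1 h :: ('d,'n::finite) cfg \<Rightarrow> _)"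
  unfolding tsmooth_on_def
proof (intro ballI impI)
  fix X :: "('d,'n) cfg" assume XW: "X \<in> Wsp m" and X: "tcl m X \<in> Vt l m R ch \<delta>1"
  define k where "k = (\<lambda>e. psi X e - phiu l m R ch (tcl m X) e)"
  define g where "g = (\<lambda>Y f. Y f + cc h1 h *\<^sub>R Sml m l (\<lambda>e. psi Y e - k e) f)"
  define U where "U = {Y \<in> Wsp m. (\<lambda>e. psi Y e - k e) \<in> Ubox l \<delta>1}"
  note loc = Fmap_local[OF d1 X k_def g_def]
  have "X \<in> U" using XW loc(1) by (simp add: U_def)
  moreover have "openin (top_of_set (Wsp m)) U" unfolding U_def by (rule Ubox_open_set) (rule loc(4))
  moreover have "\<forall>Y\<in>U. tcl m Y \<in> Vt l m R ch \<delta>1 \<and> tcl m (g Y) = Fmap l m R ch h1 h (tcl m Y)"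
    using loc(2) by (simp add: U_def)
  moreover have "smooth_on m U g"
    unfolding smooth_on_def
  proof
    fix j
    show "Ck j m U g"
    proof (rule affine_Ck[of g "\<lambda>v f. v f + cc h1 h *\<^sub>R Sml m l (psi v) f"])
      fix X v :: "('d,'n) cfg" and t :: real and e
      have "psi (\<lambda>e'. X e' + t *\<^sub>R v e') = (\<lambda>e. psi X e + t *\<^sub>R psi v e)"
        using psi_lin[of 1 X t v] by simp
      then have "Sml m l (\<lambda>e. psi (\<lambda>e'. X e' + t *\<^sub>R v e') e - k e)
          = Sml m l (\<lambda>e. 1 *\<^sub>R (psi X e - k e) + t *\<^sub>R psi v e)"
        by (simp add: algebra_simps)
      then show "g (\<lambda>e'. X e' + t *\<^sub>R v e') e = g X e + t *\<^sub>R (v e + cc h1 h *\<^sub>R Sml m l (psi v) e)"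
        unfolding g_def Sml_lin by (simp add: algebra_simps)
    next
      fix e
      show "continuous_on U (\<lambda>X. g X e)"
        unfolding g_def by (intro continuous_intros cont_coord Sml_cont psi_cont)
    qed
  qed
  ultimately show "\<exists>U g. X \<in> U \<and> openin (top_of_set (Wsp m)) U \<and>
        (\<forall>Y\<in>U. tcl m Y \<in> Vt l m R ch \<delta>1 \<and> tcl m (g Y) = Fmap l m R ch h1 h (tcl m Y)) \<and> smooth_on m U g"
    by blast
qed

end



lemma line_near:
  fixes X v :: "('d::finite,'n::finite) cfg"
  assumes "openin (top_of_set (Wsp m)) V" "X \<in> V" "v \<in> Wsp m"
  shows "eventually (\<lambda>t. (\<lambda>e'. X e' + t *\<^sub>R v e') \<in> V) (nhds 0)"
proof -
  obtain T where T: "open T" "V = Wsp m \<inter> T" using assms(1) unfolding openin_open by blast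
  let ?L = "\<lambda>t::real. (\<lambda>e'. X e' + t *\<^sub>R v e')"
  have c: "continuous_on UNIV ?L"
    by (intro continuous_on_coordinatewise_then_product continuous_intros)
  have "open (?L -` T)"
    by (rule continuous_open_vimage[OF T(1)]) (use c continuous_on_eq_continuous_at in blast)
  moreover have "0 \<in> ?L -` T" using assms(2) T by simp
  moreover have "\<forall>t. ?L t \<in> Wsp m"
    using assms(2,3) T by (simp add: Wsp_def)
  ultimately show ?thesis unfolding eventually_nhds using T by blast
qed

lemma Ints_vec_small:
  fixes a :: "real ^ 'n::finite"
  assumes "\<And>i. a $ i \<in> \<int>" "norm a < 1"
  shows "a = 0"
proof (rule vec_eq_iff[THEN iffD2], rule allI)
  fix i
  have "\<bar>a $ i\<bar> < 1" using component_le_norm_cart[of a i] assms(2) by linarith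
  then show "a $ i = 0 $ i" using Ints_abs_lt1 assms(1) by simp
qed

context Lctx begin

lemma g0_lin:
  "(\<lambda>Y f. Y f + c *\<^sub>R Sml m l (\<lambda>e. psi Y e - k e) f) (\<lambda>e'. X e' + t *\<^sub>R v e') e
    = (\<lambda>Y f. Y f + c *\<^sub>R Sml m l (\<lambda>e. psi Y e - k e) f) X e + t *\<^sub>R (v e + c *\<^sub>R Sml m l (psi v) e)"
proof -
  have "psi (\<lambda>e'. X e' + t *\<^sub>R v e') = (\<lambda>e. psi X e + t *\<^sub>R psi v e)"
    using psi_lin[of 1 X t v] by simp
  then have "Sml m l (\<lambda>e. psi (\<lambda>e'. X e' + t *\<^sub>R v e') e - k e)
      = Sml m l (\<lambda>e. 1 *\<^sub>R (psi X e - k e) + t *\<^sub>R psi v e)"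
    by (simp add: algebra_simps)
  then show ?thesis unfolding Sml_lin by (simp add: algebra_simps)
qed

lemma jac_entry:
  fixes g :: "('d,'n::finite) cfg \<Rightarrow> ('d,'n) cfg" and h1 h \<delta>1 :: real
  assumes d1: "0 \<le> \<delta>1" and XU: "X \<in> U" and Uo: "openin (top_of_set (Wsp m)) U"
    and gU: "\<forall>Y\<in>U. tcl m Y \<in> Vt l m R ch \<delta>1 \<and> tcl m (g Y) = Fmap l m R ch h1 h (tcl m Y)"
    and hp: "has_partials m U g Dg" and f': "f' \<in> m" and f: "f \<in> m"
  shows "Dg f' j X f = bvec f' j f + cc h1 h *\<^sub>R Sml m l (psi (bvec f' j)) f"
proof -
  define v where "v = bvec f' j"
  define Dl where "Dl = v f + cc h1 h *\<^sub>R Sml m l (psi v) f"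
  let ?L = "\<lambda>t::real. (\<lambda>e'. X e' + t *\<^sub>R v e')"
  have L0: "?L 0 = X" by simp
  have vW: "v \<in> Wsp m" using f' by (simp add: v_def Wsp_def bvec_def)
  have XV: "tcl m X \<in> Vt l m R ch \<delta>1" using gU XU by blast
  define k where "k = (\<lambda>e. psi X e - phiu l m R ch (tcl m X) e)"
  define g0 where "g0 = (\<lambda>Y f. Y f + cc h1 h *\<^sub>R Sml m l (\<lambda>e. psi Y e - k e) f)"
  note loc = Fmap_local[OF d1 XV k_def g0_def]
  define U0 where "U0 = {Y \<in> Wsp m. (\<lambda>e. psi Y e - k e) \<in> Ubox l \<delta>1}"
  have XW: "X \<in> Wsp m" using Uo XU openin_subset by fastforce
  have U0o: "openin (top_of_set (Wsp m)) U0" unfolding U0_def by (rule Ubox_open_set) (rule loc(4))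
  have XU0: "X \<in> U0" using XW loc(1) by (simp add: U0_def)
  have gder: "((\<lambda>t. g (?L t) f) has_vector_derivative Dg f' j X f) (at 0)"
    using hp XU f' f unfolding has_partials_def v_def by blast
  have g0L: "g0 (?L t) f = g0 X f + t *\<^sub>R Dl" for t
    unfolding g0_def Dl_def by (rule g0_lin)
  define Dd where "Dd = (\<lambda>t. g (?L t) f - g0 (?L t) f)"
  have cDd: "isCont Dd 0"
    unfolding Dd_def g0L
    by (intro continuous_intros has_vector_derivative_continuous[OF gder])
  have ev3: "eventually (\<lambda>t. dist (Dd t) (Dd 0) < 1/2) (nhds 0)"
  proof -
    have "eventually (\<lambda>t. dist (Dd t) (Dd 0) < 1/2) (at 0)"
      using cDd unfolding isCont_def by (rule tendstoD) simp
    then show ?thesis unfolding eventually_at_filter by (rule eventually_mono) auto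
  qed
  have intY: "Y \<in> U \<Longrightarrow> Y \<in> U0 \<Longrightarrow> (g Y f - g0 Y f) $ i \<in> \<int>" for Y i
  proof -
    assume "Y \<in> U" "Y \<in> U0"
    then have "tcl m (g Y) = tcl m (g0 Y)" using gU loc(2) by (simp add: U0_def)
    then show ?thesis using f unfolding tcl_eq_iff by simp
  qed
  have ev: "eventually (\<lambda>t. g (?L t) f = g0 (?L t) f + Dd 0) (nhds 0)"
    using ev3 line_near[OF Uo XU vW] line_near[OF U0o XU0 vW]
  proof (eventually_elim)
    case (elim t)
    have "Dd t - Dd 0 = 0"
    proof (rule Ints_vec_small)
      fix i
      have "Dd t $ i \<in> \<int>" "Dd 0 $ i \<in> \<int>" using intY elim XU XU0 by (simp_all add: Dd_def)
      then show "(Dd t - Dd 0) $ i \<in> \<int>" by simp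
      show "norm (Dd t - Dd 0) < 1" using elim(1) by (simp add: dist_norm)
    qed
    then show ?case by (simp add: Dd_def algebra_simps)
  qed
  have "((\<lambda>t. g0 (?L t) f + Dd 0) has_vector_derivative Dl) (at 0)"
    unfolding g0L using lin_vd[of "g0 X f + Dd 0" Dl 0] by (simp add: algebra_simps)
  then have "((\<lambda>t. g (?L t) f) has_vector_derivative Dl) (at 0)"
    using has_vector_derivative_cong_ev[of UNIV "\<lambda>t. g (?L t) f" "\<lambda>t. g0 (?L t) f + Dd 0" 0 Dl] ev
    by (simp add: Dd_def)
  then have "Dg f' j X f = Dl" using gder vector_derivative_unique_at by blast
  then show ?thesis by (simp add: Dl_def v_def)
qed

end



lemma det_on_cong:
  assumes "\<And>x y. x \<in> I \<Longrightarrow> y \<in> I \<Longrightarrow> M x y = M' x y"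
  shows "det_on I M = det_on I M'"
  unfolding det_on_def
proof (rule sum.cong[OF refl])
  fix p assume "p \<in> {p. p permutes I}"
  then have "\<And>x. x \<in> I \<Longrightarrow> p x \<in> I" using permutes_in_image by fastforce
  then show "of_int (sign p) * (\<Prod>i\<in>I. M i (p i)) = of_int (sign p) * (\<Prod>i\<in>I. M' i (p i))"
    using assms by simp
qed

context Lctx begin

lemma psi_bvec: "psi (bvec f' j) e = (if e \<in> l \<and> f' \<in> P e then axis j 1 else 0)"
proof -
  have "(\<Sum>f\<in>P e. bvec f' j f) = (if f' \<in> P e then axis j 1 else 0)"
    unfolding bvec_def using fin_pieces by (simp add: sum.delta')
  then show ?thesis by (simp add: psi_def)
qed

lemma Sml_zero: "Sml m l (\<lambda>e. 0) = (\<lambda>f. 0)"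
  by (simp add: Sml_def)

definition Jm :: "real \<Rightarrow> ('d edge \<times> 'n::finite) \<Rightarrow> ('d edge \<times> 'n) \<Rightarrow> real" where
  "Jm c x y = (bvec (fst y) (snd y) (fst x) + c *\<^sub>R Sml m l (psi (bvec (fst y) (snd y))) (fst x)) $ snd x"

lemma Jm_cases:
  assumes "f \<in> m"
  shows "Jm c (f, i) (f', j) = (if f = f' \<and> i = j then 1 else 0)
     + (if i = j then c * (\<Sum>e\<in>{e \<in> l. f \<in> pieces e m}. if f' \<in> P e then elen f / elen e else 0) else 0)"
proof -
  have "Sml m l (psi (bvec f' j)) f $ i
      = (if i = j then (\<Sum>e\<in>{e \<in> l. f \<in> pieces e m}. if f' \<in> P e then elen f / elen e else 0) else 0)"
  proof (cases "i = j")
    case True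
    then show ?thesis unfolding Sml_def psi_bvec sum_component by (simp, intro sum.cong) (auto simp: axis_def)
  next
    case False
    then show ?thesis unfolding Sml_def psi_bvec sum_component by (simp, intro sum.neutral) (auto simp: axis_def)
  qed
  moreover have "bvec f' j f $ i = (if f = f' \<and> i = j then 1 else 0)"
    by (simp add: bvec_def axis_def)
  ultimately show ?thesis unfolding Jm_def by simp
qed

lemma det_Jm: "det_on (m \<times> (UNIV :: 'n::finite set)) (Jm c) = (1 + c / real R) ^ (CARD('n) * card l)"
proof -
  let ?I = "m \<times> (UNIV :: 'n set)"
  let ?Q = "(\<Union>e\<in>l. P e) \<times> (UNIV :: 'n set)"
  have PM: "P e \<subseteq> m" for e using pieces_m by blast
  have "det_on ?I (Jm c) = det_on ?Q (Jm c)"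
  proof (rule det_on_reduce)
    show "finite ?I" using fin_m by simp
    show "?Q \<subseteq> ?I" using PM by auto
    fix x y assume x: "x \<in> ?I" and y: "y \<in> ?I" "y \<notin> ?Q"
    obtain f i where xd: "x = (f, i)" by (cases x)
    obtain f' j where yd: "y = (f', j)" by (cases y)
    have "\<forall>e\<in>l. f' \<notin> P e" using y yd by auto
    then have "psi (bvec f' j) = (\<lambda>e. 0)" by (auto simp: psi_bvec)
    then show "Jm c x y = (if x = y then 1 else 0)"
      using xd yd by (auto simp: Jm_def Sml_zero bvec_def axis_def)
  qed
  also have "?Q = (\<Union>k\<in>l \<times> (UNIV :: 'n set). P (fst k) \<times> {snd k})" by auto
  also have "det_on \<dots> (Jm c) = (\<Prod>k\<in>l \<times> (UNIV :: 'n set). det_on (P (fst k) \<times> {snd k}) (Jm c))"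
  proof (rule det_on_blocks)
    show "finite (l \<times> (UNIV :: 'n set))" using fin_l by simp
    show "\<And>k. finite (P (fst k) \<times> {snd k})" using fin_pieces by simp
    show "\<And>k k'. k \<in> l \<times> UNIV \<Longrightarrow> k' \<in> l \<times> UNIV \<Longrightarrow> k \<noteq> k' \<Longrightarrow>
        P (fst k) \<times> {snd k} \<inter> P (fst k') \<times> {snd k'} = {}"
      using P_disj by (auto simp: prod_eq_iff)
    fix k k' x y
    assume k: "k \<in> l \<times> (UNIV :: 'n set)" "k' \<in> l \<times> (UNIV :: 'n set)" "k \<noteq> k'"
      and x: "x \<in> P (fst k) \<times> {snd k}" and y: "y \<in> P (fst k') \<times> {snd k'}"
    obtain e i where kd: "k = (e, i)" by (cases k)
    obtain e' i' where kd': "k' = (e', i')" by (cases k')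
    obtain f where xd: "x = (f, i)" and fP: "f \<in> P e" using x kd by auto
    obtain f' where yd: "y = (f', i')" and fP': "f' \<in> P e'" using y kd' by auto
    have e: "e \<in> l" "e' \<in> l" using k kd kd' by auto
    have fm: "f \<in> m" using fP pieces_m by blast
    have own: "{e'' \<in> l. f \<in> pieces e'' m} = {e}" using P_owner[OF e(1) fP] .
    show "Jm c x y = 0"
    proof (cases "e = e'")
      case True
      then have "i \<noteq> i'" using k(3) kd kd' by simp
      then show ?thesis unfolding xd yd Jm_cases[OF fm] by simp
    next
      case False
      have "f \<noteq> f'" using False P_disj e fP fP' by blast
      moreover have "f' \<notin> P e" using False P_disj e fP' by blast
      ultimately show ?thesis unfolding xd yd Jm_cases[OF fm] own by simp
    qed
  qed
  also have "\<dots> = (\<Prod>k\<in>l \<times> (UNIV :: 'n set). 1 + c / real R)"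
  proof (rule prod.cong[OF refl])
    fix k assume k: "k \<in> l \<times> (UNIV :: 'n set)"
    obtain e i where kd: "k = (e, i)" by (cases k)
    have e: "e \<in> l" using k kd by auto
    have "det_on (P e \<times> {i}) (Jm c)
        = det_on (P e \<times> {i}) (\<lambda>x y. (if x = y then 1 else 0) + c * elen (fst x) / elen e)"
    proof (rule det_on_cong)
      fix x y assume x: "x \<in> P e \<times> {i}" and y: "y \<in> P e \<times> {i}"
      obtain f where xd: "x = (f, i)" and fP: "f \<in> P e" using x by auto
      obtain f' where yd: "y = (f', i)" and fP': "f' \<in> P e" using y by auto
      have fm: "f \<in> m" using fP pieces_m by blast
      show "Jm c x y = (if x = y then 1 else 0) + c * elen (fst x) / elen e"
        unfolding xd yd Jm_cases[OF fm] P_owner[OF e fP] using fP' by simp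
    qed
    also have "\<dots> = 1 + (\<Sum>x\<in>P e \<times> {i}. c * elen (fst x) / elen e)"
      by (rule det_on_rank1) (simp add: fin_pieces)
    also have "(\<Sum>x\<in>P e \<times> {i}. c * elen (fst x) / elen e) = c / elen e * (\<Sum>f\<in>P e. elen f)"
    proof -
      have "P e \<times> {i} = (\<lambda>f. (f, i)) ` P e" by auto
      then have "(\<Sum>x\<in>P e \<times> {i}. c * elen (fst x) / elen e) = (\<Sum>f\<in>P e. c * elen f / elen e)"
        by (simp add: sum.reindex inj_on_def)
      then show ?thesis by (simp add: sum_distrib_left)
    qed
    also have "\<dots> = c / real R"
      using ch_sum[OF e] ch_len[OF e] elen_pos[OF e] by simp
    finally show "det_on (P (fst k) \<times> {snd k}) (Jm c) = 1 + c / real R" using kd by simp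
  qed
  also have "\<dots> = (1 + c / real R) ^ (CARD('n) * card l)"
    using fin_l by (simp add: card_cartesian_product mult.commute)
  finally show ?thesis .
qed

end



lemma no_int_between: "(n::real) \<in> \<int> \<Longrightarrow> 0 < n \<Longrightarrow> n < 1 \<Longrightarrow> False"
  by (elim Ints_cases) simp

lemma path_real:
  fixes \<alpha> \<beta> :: real
  assumes a: "\<bar>\<alpha>\<bar> < 1/2"
    and h: "\<forall>t\<in>{0..1}. \<exists>\<zeta>. \<bar>\<zeta>\<bar> < 1/2 \<and> \<alpha> + t * \<beta> - \<zeta> \<in> \<int>"
  shows "\<bar>\<alpha> + \<beta>\<bar> < 1/2"
proof (rule ccontr)
  assume "\<not> \<bar>\<alpha> + \<beta>\<bar> < 1/2"
  then consider "\<alpha> + \<beta> \<ge> 1/2" | "\<alpha> + \<beta> \<le> - 1/2" by linarith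
  then show False
  proof cases
    case 1
    then have bp: "\<beta> > 0" using a by linarith
    define t where "t = (1/2 - \<alpha>) / \<beta>"
    have t: "0 \<le> t" "t \<le> 1" using 1 a bp by (auto simp: t_def divide_simps)
    have at: "\<alpha> + t * \<beta> = 1/2" using bp by (simp add: t_def)
    obtain \<zeta> where z: "\<bar>\<zeta>\<bar> < 1/2" "\<alpha> + t * \<beta> - \<zeta> \<in> \<int>" using bspec[OF h, of t] t by auto
    show False by (rule no_int_between[OF z(2)]) (use z(1) at in linarith)+
  next
    case 2
    then have bp: "\<beta> < 0" using a by linarith
    define t where "t = (- 1/2 - \<alpha>) / \<beta>"
    have t: "0 \<le> t" "t \<le> 1" using 2 a bp by (auto simp: t_def divide_simps)
    have at: "\<alpha> + t * \<beta> = - 1/2" using bp by (simp add: t_def)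
    obtain \<zeta> where z: "\<bar>\<zeta>\<bar> < 1/2" "\<alpha> + t * \<beta> - \<zeta> \<in> \<int>" using bspec[OF h, of t] t by auto
    have "- (\<alpha> + t * \<beta> - \<zeta>) \<in> \<int>" using Ints_minus[OF z(2)] .
    show False by (rule no_int_between[OF \<open>- (\<alpha> + t * \<beta> - \<zeta>) \<in> \<int>\<close>]) (use z(1) at in linarith)+
  qed
qed

context Lctx begin

lemma path_claim:
  fixes q \<xi> :: "('d,'n::finite) cfg" and h1 h \<delta>1 :: real
  assumes h1: "h1 \<noteq> 0" and d1: "0 \<le> \<delta>1" and qG: "q \<in> Gsp m"
    and path: "\<forall>t\<in>{0..1}. tadd m q (\<lambda>f. t *\<^sub>R Sml m l (\<lambda>e. h1 *\<^sub>R \<xi> e) f) \<in> Vt l m R ch \<delta>1"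
  shows "Fmap l m R ch h1 h (tadd m q (Sml m l (\<lambda>e. h1 *\<^sub>R \<xi> e)))
       = tadd m (Fmap l m R ch h1 h q) (Sml m l (\<lambda>e. h *\<^sub>R \<xi> e))"
proof -
  let ?S = "Sml m l (\<lambda>e. h1 *\<^sub>R \<xi> e)"
  define qt where "qt = (\<lambda>t. tcl m (\<lambda>f. q f + t *\<^sub>R ?S f))"
  have qt_eq: "tadd m q (\<lambda>f. t *\<^sub>R ?S f) = qt t" for t by (simp add: tadd_def qt_def)
  have "qt 0 = q" using tcl_idem[OF qG] by (simp add: qt_def)
  then have qV: "q \<in> Vt l m R ch \<delta>1" using path qt_eq[of 0] by force
  define \<xi>0 where "\<xi>0 = phiu l m R ch q"
  have x0U: "\<xi>0 \<in> Ubox l \<delta>1" and px0: "phi l m R ch q = tcl l \<xi>0"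
    using Vt_phiu[OF qV d1] by (auto simp: \<xi>0_def)
  have "tcl l (psi q) = tcl l \<xi>0" using px0 phi_Gsp[OF qG] by simp
  then have int0: "\<And>e i. e \<in> l \<Longrightarrow> psi q e $ i - \<xi>0 e $ i \<in> \<int>" unfolding tcl_eq_iff by blast
  define a where "a = (\<lambda>e. if e \<in> l then (h1 / real R) *\<^sub>R \<xi> e else 0)"
  have psiS: "psi ?S = a"
    unfolding psi_Sml a_def by (rule ext) (simp add: scaleR_scaleR)
  have phqt: "phi l m R ch (qt t) = tcl l (\<lambda>e. \<xi>0 e + t *\<^sub>R a e)" for t
  proof -
    have "phi l m R ch (qt t) = tcl l (psi (\<lambda>f. q f + t *\<^sub>R ?S f))" by (simp add: qt_def phi_tcl)
    also have "psi (\<lambda>f. q f + t *\<^sub>R ?S f) = (\<lambda>e. psi q e + t *\<^sub>R a e)"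
      using psi_lin[of 1 q t ?S] psiS by simp
    also have "tcl l \<dots> = tcl l (\<lambda>e. \<xi>0 e + t *\<^sub>R a e)" by (rule tcl_cong_int) (rule int0)
    finally show ?thesis .
  qed
  define \<xi>1 where "\<xi>1 = (\<lambda>e. \<xi>0 e + a e)"
  have x1U: "\<xi>1 \<in> Ubox l 0"
    unfolding Ubox_def
  proof (intro CollectI conjI ballI allI impI)
    fix e i assume e: "e \<in> l"
    have "\<bar>\<xi>0 e $ i + a e $ i\<bar> < 1/2"
    proof (rule path_real)
      have "- 1/2 + \<delta>1/2 < \<xi>0 e $ i" "\<xi>0 e $ i < 1/2 - \<delta>1/2" using x0U e by (auto simp: Ubox_def)
      then show "\<bar>\<xi>0 e $ i\<bar> < 1/2" using d1 by linarith
      show "\<forall>t\<in>{0..1}. \<exists>\<zeta>. \<bar>\<zeta>\<bar> < 1/2 \<and> \<xi>0 e $ i + t * a e $ i - \<zeta> \<in> \<int>"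
      proof
        fix t :: real assume t: "t \<in> {0..1}"
        have "qt t \<in> Vt l m R ch \<delta>1" using bspec[OF path t] qt_eq[of t] by simp
        then obtain \<zeta> where z: "\<zeta> \<in> Ubox l \<delta>1" "phi l m R ch (qt t) = tcl l \<zeta>" unfolding Vt_iff by blast
        have "tcl l (\<lambda>e. \<xi>0 e + t *\<^sub>R a e) = tcl l \<zeta>" using z(2) phqt[of t] by simp
        then have "(\<xi>0 e + t *\<^sub>R a e) $ i - \<zeta> e $ i \<in> \<int>"
          using e unfolding tcl_eq_iff by blast
        moreover have "- 1/2 + \<delta>1/2 < \<zeta> e $ i" "\<zeta> e $ i < 1/2 - \<delta>1/2" using z(1) e by (auto simp: Ubox_def)
        ultimately show "\<exists>\<zeta>. \<bar>\<zeta>\<bar> < 1/2 \<and> \<xi>0 e $ i + t * a e $ i - \<zeta> \<in> \<int>"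
          using d1 by (intro exI[of _ "\<zeta> e $ i"]) auto
      qed
    qed
    then show "- 1/2 + 0/2 < \<xi>1 e $ i" "\<xi>1 e $ i < 1/2 - 0/2" unfolding \<xi>1_def by (simp_all, linarith+)
  next
    fix e assume "e \<notin> l"
    then show "\<xi>1 e = 0" using Ubox_off[OF x0U] by (simp add: \<xi>1_def a_def)
  qed
  have "phi l m R ch (qt 1) = tcl l \<xi>1" using phqt[of 1] by (simp add: \<xi>1_def)
  then have pu1: "phiu l m R ch (qt 1) = \<xi>1" using phiu_eq x1U by blast
  have q1: "tadd m q ?S = qt 1" by (simp add: tadd_def qt_def)
  have "Fmap l m R ch h1 h (tadd m q ?S) = tcl m (\<lambda>f. q f + ?S f + cc h1 h *\<^sub>R Sml m l \<xi>1 f)"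
    unfolding q1 Fmap_alt pu1 by (simp add: qt_def tcl_tcl_add add.assoc)
  also have "\<dots> = tcl m (\<lambda>f. q f + cc h1 h *\<^sub>R Sml m l \<xi>0 f + Sml m l (\<lambda>e. h *\<^sub>R \<xi> e) f)"
  proof -
    have "Sml m l \<xi>1 = (\<lambda>f. 1 *\<^sub>R Sml m l \<xi>0 f + 1 *\<^sub>R Sml m l a f)"
      using Sml_lin[of 1 \<xi>0 1 a] by (simp add: \<xi>1_def)
    moreover have "Sml m l a = Sml m l (\<lambda>e. (h1 / real R) *\<^sub>R \<xi> e)"
      by (rule Sml_cong) (simp add: a_def)
    moreover have "cc h1 h * (h1 / real R) = h - h1"
      using Rpos assms by (simp add: cc_def field_simps)
    moreover have gen: "\<And>(x::real^'n) y k. h1 *\<^sub>R x + (y + k *\<^sub>R x) = (h1 + k) *\<^sub>R x + y"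
      by (simp add: algebra_simps)
    ultimately show ?thesis
      apply (simp add: Sml_scale algebra_simps flip: scaleR_scaleR)
      apply (simp only: scaleR_scaleR gen)
      by (simp add: algebra_simps)
  qed
  also have "\<dots> = tadd m (Fmap l m R ch h1 h q) (Sml m l (\<lambda>e. h *\<^sub>R \<xi> e))"
    unfolding tadd_def Fmap_alt tcl_tcl_add \<xi>0_def ..
  finally show ?thesis .
qed

end



theorem mainTheorem14:
  fixes l m :: "('d::{finite,linorder}) edge set" and R :: nat
    and ch :: "'d edge \<Rightarrow> 'd edge"
    and h1 h \<delta>1 \<delta>2 :: real
  assumes "lattice l" and "lattice m" and "R > 0"
    and "subdiv (refine l R) m"
    and "\<forall>f\<in>m. \<exists>e\<in>refine l R. f \<in> pieces e m"
    and "\<forall>e\<in>l. ch e \<in> pieces e (refine l R)"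
    and "h1 \<in> {-1..1}" and "h1 \<noteq> 0" and "h \<in> {-1..1}" and "sgn h = sgn h1"
    and "\<delta>1 \<in> {0<..<1}" and "\<delta>2 \<in> {0<..<1}" and "h * (1 - \<delta>1) = h1 * (1 - \<delta>2)"
  shows "tdiffeo m (Vt l m R ch \<delta>1) (Vt l m R ch \<delta>2)
           (Fmap l m R ch h1 h :: ('d,'n::finite) cfg \<Rightarrow> ('d,'n) cfg)
       \<and> (\<forall>X U g Dg. X \<in> U \<and> openin (top_of_set (Wsp m)) U
            \<and> (\<forall>Y\<in>U. tcl m Y \<in> Vt l m R ch \<delta>1 \<and> tcl m (g Y) = Fmap l m R ch h1 h (tcl m Y))
            \<and> Ck 0 m U g \<and> has_partials m U g Dg
            \<longrightarrow> \<bar>det_on (m \<times> (UNIV :: 'n set)) (\<lambda>(f, i) (f', j). Dg f' j X f $ i)\<bar>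
                = (h / h1) ^ (CARD('n) * card l))
       \<and> (\<forall>(q :: ('d,'n) cfg) \<xi>. q \<in> Gsp m
            \<and> (\<forall>t\<in>{0..1}. tadd m q (\<lambda>f. t *\<^sub>R Sml m l (\<lambda>e. h1 *\<^sub>R \<xi> e) f) \<in> Vt l m R ch \<delta>1)
            \<longrightarrow> Fmap l m R ch h1 h (tadd m q (Sml m l (\<lambda>e. h1 *\<^sub>R \<xi> e)))
                = tadd m (Fmap l m R ch h1 h q) (Sml m l (\<lambda>e. h *\<^sub>R \<xi> e)))"
proof -
  interpret Lctx l m R ch
    by unfold_locales (use assms in auto)
  have h1: "h1 \<noteq> 0" using assms by simp
  have h: "h \<noteq> 0" using assms by (metis sgn_0_0)
  have pos: "h / h1 > 0"
  proof (cases "h1 > 0")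
    case True
    then have "h > 0" using assms(10) h by (auto simp: sgn_if split: if_splits)
    then show ?thesis using True by simp
  next
    case False
    then have "h1 < 0" using h1 by simp
    moreover then have "h < 0" using assms(10) h by (auto simp: sgn_if split: if_splits)
    ultimately show ?thesis by (simp add: divide_neg_neg)
  qed
  have pos': "h1 / h > 0" using pos by (simp add: zero_less_divide_iff) blast
  have d1: "0 \<le> \<delta>1" and d2: "0 \<le> \<delta>2" using assms by auto
  have hd: "h * (1 - \<delta>1) = h1 * (1 - \<delta>2)" using assms by simp
  have hd': "h1 * (1 - \<delta>2) = h * (1 - \<delta>1)" using hd by simp
  let ?A = "Vt l m R ch \<delta>1 :: ('d,'n) cfg set"
  let ?B = "Vt l m R ch \<delta>2 :: ('d,'n) cfg set"
  let ?F = "Fmap l m R ch h1 h :: ('d,'n) cfg \<Rightarrow> ('d,'n) cfg"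
  let ?G = "Fmap l m R ch h h1 :: ('d,'n) cfg \<Rightarrow> ('d,'n) cfg"
  have GF: "\<forall>a\<in>?A. ?G (?F a) = a" using Fmap_inv[OF h1 h pos d1 d2 hd] by blast
  have FG: "\<forall>a\<in>?B. ?F (?G a) = a" using Fmap_inv[OF h h1 pos' d2 d1 hd'] by blast
  have FA: "?F ` ?A \<subseteq> ?B" using Fmap_maps(1)[OF h1 pos d1 hd] by blast
  have GB: "?G ` ?B \<subseteq> ?A" using Fmap_maps(1)[OF h pos' d2 hd'] by blast
  have bij: "bij_betw ?F ?A ?B" by (rule bij_betw_byWitness[OF GF FG FA GB])
  have inv: "\<And>b. b \<in> ?B \<Longrightarrow> ?G b = inv_into ?A ?F b"
  proof -
    fix b assume b: "b \<in> ?B"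
    have "inv_into ?A ?F b = ?G b"
      by (rule inv_into_f_eq) (use bij b FG GB in \<open>auto simp: bij_betw_def\<close>)
    then show "?G b = inv_into ?A ?F b" by simp
  qed
  have part1: "tdiffeo m ?A ?B ?F"
    unfolding tdiffeo_def
    using bij Fmap_tsmooth[OF d1, of h1 h] tsmooth_cong[OF inv Fmap_tsmooth[OF d2, of h h1]] by blast
  have part2: "\<forall>X U g Dg. X \<in> U \<and> openin (top_of_set (Wsp m)) U
            \<and> (\<forall>Y\<in>U. tcl m Y \<in> ?A \<and> tcl m (g Y) = ?F (tcl m Y))
            \<and> Ck 0 m U g \<and> has_partials m U g Dg
            \<longrightarrow> \<bar>det_on (m \<times> (UNIV :: 'n set)) (\<lambda>(f, i) (f', j). Dg f' j X f $ i)\<bar>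
                = (h / h1) ^ (CARD('n) * card l)"
  proof (intro allI impI)
    fix X U g Dg
    assume a: "X \<in> U \<and> openin (top_of_set (Wsp m)) U
            \<and> (\<forall>Y\<in>U. tcl m Y \<in> ?A \<and> tcl m (g Y) = ?F (tcl m Y))
            \<and> Ck 0 m U g \<and> has_partials m U g Dg"
    have "det_on (m \<times> (UNIV :: 'n set)) (\<lambda>(f, i) (f', j). Dg f' j X f $ i)
        = det_on (m \<times> (UNIV :: 'n set)) (Jm (cc h1 h))"
    proof (rule det_on_cong)
      fix x y assume x: "x \<in> m \<times> (UNIV :: 'n set)" and y: "y \<in> m \<times> (UNIV :: 'n set)"
      obtain f i where xd: "x = (f, i)" by (cases x)
      obtain f' j where yd: "y = (f', j)" by (cases y)
      have fm: "f \<in> m" "f' \<in> m" using x y xd yd by auto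
      have "Dg f' j X f = bvec f' j f + cc h1 h *\<^sub>R Sml m l (psi (bvec f' j)) f"
        using jac_entry[OF d1, of X U g h1 h Dg f' f j] a fm by blast
      then show "(\<lambda>(f, i) (f', j). Dg f' j X f $ i) x y = Jm (cc h1 h) x y"
        using xd yd by (simp add: Jm_def)
    qed
    also have "\<dots> = (1 + cc h1 h / real R) ^ (CARD('n) * card l)" by (rule det_Jm)
    also have "1 + cc h1 h / real R = h / h1" using Rpos by (simp add: cc_def)
    finally show "\<bar>det_on (m \<times> (UNIV :: 'n set)) (\<lambda>(f, i) (f', j). Dg f' j X f $ i)\<bar>
                = (h / h1) ^ (CARD('n) * card l)" using pos by simp
  qed
  have part3: "\<forall>(q :: ('d,'n) cfg) \<xi>. q \<in> Gsp m
            \<and> (\<forall>t\<in>{0..1}. tadd m q (\<lambda>f. t *\<^sub>R Sml m l (\<lambda>e. h1 *\<^sub>R \<xi> e) f) \<in> ?A)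
            \<longrightarrow> ?F (tadd m q (Sml m l (\<lambda>e. h1 *\<^sub>R \<xi> e)))
                = tadd m (?F q) (Sml m l (\<lambda>e. h *\<^sub>R \<xi> e))"
    using path_claim[OF h1 d1] by blast
  show ?thesis using part1 part2 part3 by blast
qed


end
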